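(* Let $(Z,d,\mu)$, $Q$, $X$, $(\psi_x)$, $T_n$ be as in the context. Suppose $0<s<\infty$, $Q/(Q+s)<p\le\infty$, $0<q\le\infty$. If $u:X\to\mathbb C$ satisfies $|du|\in\mathcal I^s_{p,q}(X)$, then the limit $\mathrm{Tr}\,u:=\lim_{n\to\infty}T_nu$ exists in $L^1_{\rm loc}(Z)$ and pointwise $\mu$-a.e., and for every $x\in X$ there is a constant $C_x$ (depending on $x$ but not on $u$) such that $\|\mathrm{Tr}\,u-u(x)\|_{L^1(B(x))}\le C_x\|\,|du|\,\|_{\mathcal I^s_{p,q}(X)}$.
   Context: $(Z,d,\mu)$ is a metric measure space, $\mu$ Borel regular, every ball has positive finite measure, and $\mu$ is doubling. Fix constants $C\ge1$, $Q>0$ with $\mu(B(\xi,\lambda r)) \le C\lambda^Q\mu(B(\xi,r))$ for all $\xi\in Z$, $r>0$, $\lambda\ge1$. Hyperbolic filling: for each $n\in\mathbb Z$ let $(\xi_x)_{x\in X_n}$ be a maximal set of points of $Z$ with pairwise distances at least $2^{-n-1}$; $X=\bigsqcup_n X_n$, $|x|:=n$ for $x\in X_n$, $B(x):=B(\xi_x,2^{-n})$. Distinct $x,x'\in X$ are neighbors, $x\sim x'$, iff $B(x)\cap B(x')\ne\emptyset$ and $||x|-|x'||\le1$. For $u:X\to\mathbb C$, $|du(x)| := \big(\sum_{x'\sim x}|u(x')-u(x)|^2\big)^{1/2}$. $\mathcal I^s_{p,q}(X)$: sequences $u:X\to\mathbb C$ with $\|u\|_{\mathcal I^s_{p,q}(X)}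 := \big(\sum_{k\in\mathbb Z}2^{ksq}\|\sum_{x\in X_k}|u(x)|\chi_{B(x)}\|_{L^p(Z)}^q\big)^{1/q}<\infty$ (usual modification for $p$ or $q=\infty$). $(\psi_x)_{x\in X}$: non-negative Lipschitz functions with $\psi_x$ supported in $B(x)$, $(\psi_x)_{x\in X_n}$ a partition of unity on $Z$ for each $n$, ${\rm Lip}\,\psi_x\le C''2^{|x|}$. $T_nu:=\sum_{x\in X_n}u(x)\psi_x$. $L^1_{\rm loc}(Z)$: measurable functions integrable on bounded sets. *)

theory Defs
  imports "HOL-Analysis.Analysis" "HOL-Probability.Essential_Supremum"
begin

definition epow :: "ennreal \<Rightarrow> real \<Rightarrow> ennreal" where
  "epow a r = (if a = \<infinity> then \<infinity> else ennreal (enn2real a powr r))"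

definition rad :: "int \<Rightarrow> real" where
  "rad n = 2 powr (- real_of_int n)"

definition separated :: "real \<Rightarrow> 'a::metric_space set \<Rightarrow> bool" where
  "separated r A \<longleftrightarrow> (\<forall>a\<in>A. \<forall>b\<in>A. a \<noteq> b \<longrightarrow> r \<le> dist a b)"

definition max_separated :: "int \<Rightarrow> 'a::metric_space set \<Rightarrow> bool" where
  "max_separated n A \<longleftrightarrow> separated (rad (n+1)) A \<and>
     (\<forall>T. A \<subseteq> T \<longrightarrow> separated (rad (n+1)) T \<longrightarrow> T = A)"

text \<open>Vertices of the hyperbolic filling: a vertex x of level n is encoded as (n, xi_x),
  where S n is the chosen maximal separated set of level n.\<close>
definition HX :: "(int \<Rightarrow> 'a set) \<Rightarrow> (int \<times> 'a) set" where
  "HX S = {(n, \<xi>). \<xi> \<in> S n}"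

definition Bx :: "int \<times> 'a::metric_space \<Rightarrow> 'a set" where
  "Bx x = ball (snd x) (rad (fst x))"

definition nbrs :: "(int \<Rightarrow> 'a::metric_space set) \<Rightarrow> int \<times> 'a \<Rightarrow> (int \<times> 'a) set" where
  "nbrs S x = {y \<in> HX S. y \<noteq> x \<and> Bx x \<inter> Bx y \<noteq> {} \<and> \<bar>fst x - fst y\<bar> \<le> 1}"

definition du :: "(int \<Rightarrow> 'a::metric_space set) \<Rightarrow> (int \<times> 'a \<Rightarrow> complex) \<Rightarrow> int \<times> 'a \<Rightarrow> ennreal" where
  "du S u x = epow (\<integral>\<^sup>+ y. ennreal ((cmod (u y - u x))\<^sup>2) \<partial>count_space (nbrs S x)) (1/2)"

definition Lpn :: "'a measure \<Rightarrow> ennreal \<Rightarrow> ('a \<Rightarrow> ennreal) \<Rightarrow> ennreal" where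
  "Lpn M p g = (if p = \<infinity> then esssup M g
     else epow (\<integral>\<^sup>+ z. epow (g z) (enn2real p) \<partial>M) (1 / enn2real p))"

definition level_fun :: "(int \<Rightarrow> 'a::metric_space set) \<Rightarrow> (int \<times> 'a \<Rightarrow> ennreal) \<Rightarrow> int \<Rightarrow> 'a \<Rightarrow> ennreal" where
  "level_fun S v k z = (\<integral>\<^sup>+ \<xi>. v (k, \<xi>) * indicator (Bx (k, \<xi>)) z \<partial>count_space (S k))"

text \<open>The quasi-norm of I^s_{p,q}(X) for a non-negative sequence v (the norm of u is that of |u|).\<close>
definition Inorm :: "'a::metric_space measure \<Rightarrow> (int \<Rightarrow> 'a set) \<Rightarrow> real \<Rightarrow> ennreal \<Rightarrow> ennreal
     \<Rightarrow> (int \<times> 'a \<Rightarrow> ennreal) \<Rightarrow> ennreal" where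
  "Inorm M S s p q v = (if q = \<infinity>
     then (SUP k. ennreal (2 powr (real_of_int k * s)) * Lpn M p (level_fun S v k))
     else epow (\<integral>\<^sup>+ k. epow (ennreal (2 powr (real_of_int k * s)) * Lpn M p (level_fun S v k)) (enn2real q)
                  \<partial>count_space UNIV) (1 / enn2real q))"

definition Tn :: "(int \<Rightarrow> 'a set) \<Rightarrow> (int \<times> 'a \<Rightarrow> 'a \<Rightarrow> real) \<Rightarrow> int \<Rightarrow> (int \<times> 'a \<Rightarrow> complex) \<Rightarrow> 'a \<Rightarrow> complex" where
  "Tn S \<psi> n u z = infsum (\<lambda>\<xi>. u (n, \<xi>) * complex_of_real (\<psi> (n, \<xi>) z)) (S n)"

end

theory Submission
  imports Defs
begin

lemma rad_pos[simp]: "rad n > 0" by (simp add: rad_def)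
lemma rad_succ: "rad (n+1) = rad n / 2"
  by (simp add: rad_def powr_diff powr_minus divide_simps powr_add)
lemma rad_add: "rad (n + k) = rad n * 2 powr (- real_of_int k)"
  by (simp add: rad_def powr_add[symmetric] algebra_simps)
lemma rad_mono: "m \<le> n \<Longrightarrow> rad n \<le> rad m"
  by (simp add: rad_def)

locale hf =
  fixes M :: "'a::metric_space measure" and C Q :: real and S :: "int \<Rightarrow> 'a set"
  assumes space: "space M = UNIV" and sets: "sets M = sets borel"
    and balls: "\<And>\<xi> r. r > 0 \<Longrightarrow> 0 < emeasure M (ball \<xi> r) \<and> emeasure M (ball \<xi> r) < \<infinity>"
    and C: "C \<ge> 1" and Q: "Q > 0"
    and doubling: "\<And>\<xi> r t. r > 0 \<Longrightarrow> t \<ge> 1 \<Longrightarrow>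
        measure M (ball \<xi> (t * r)) \<le> C * t powr Q * measure M (ball \<xi> r)"
    and S: "\<And>n. max_separated n (S n)"
begin

lemma ball_sets[measurable]: "ball c r \<in> sets M"
  using sets by simp

lemma sets_M_cong: "f \<in> borel_measurable borel \<Longrightarrow> f \<in> borel_measurable M"
  by (simp add: measurable_cong_sets[OF sets refl])

lemma emeasure_ball: "emeasure M (ball c r) = ennreal (measure M (ball c r))"
proof (cases "r > 0")
  case True then show ?thesis using balls[of r c] by (intro emeasure_eq_ennreal_measure) auto
next
  case False then have "ball c r = {}" by auto
  then show ?thesis by (simp only:) simp
qed

lemma measure_ball_pos: "r > 0 \<Longrightarrow> measure M (ball c r) > 0"
  using balls[of r c] emeasure_ball[of c r] by auto

lemma sep: "\<xi> \<in> S n \<Longrightarrow> \<eta> \<in> S n \<Longrightarrow> \<xi> \<noteq> \<eta> \<Longrightarrow> rad (n+1) \<le> dist \<xi> \<eta>"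
  using S[of n] unfolding max_separated_def separated_def by blast

lemma cover: "\<exists>\<xi>\<in>S n. dist \<xi> z < rad (n+1)"
proof (rule ccontr)
  assume a: "\<not> ?thesis"
  have "separated (rad (n+1)) (insert z (S n))"
    using S[of n] a unfolding max_separated_def separated_def
    by (auto simp: dist_commute not_less)
  then have "insert z (S n) = S n" using S[of n] unfolding max_separated_def by blast
  then have "z \<in> S n" by blast
  then show False using a by auto
qed

lemma small_ball_lower:
  assumes "r > 0" "R \<ge> r" "dist c \<xi> \<le> R"
  shows "measure M (ball c R) \<le> C * (2*R/r) powr Q * measure M (ball \<xi> r)"
proof -
  have "ball c R \<subseteq> ball \<xi> ((2*R/r) * r)"
    using assms apply (auto simp: dist_commute)
    by (smt (verit) dist_commute dist_triangle)
  then have "measure M (ball c R) \<le> measure M (ball \<xi> ((2*R/r) * r))"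
    using balls[of "(2*R/r)*r" \<xi>] assms
    by (intro measure_mono_fmeasurable) (auto simp: fmeasurable_def)
  also have "\<dots> \<le> C * (2*R/r) powr Q * measure M (ball \<xi> r)"
    using assms by (intro doubling) auto
  finally show ?thesis .
qed

lemma finite_near:
  "finite {\<xi>\<in>S n. dist c \<xi> < R}"
proof (rule ccontr)
  assume inf: "infinite {\<xi>\<in>S n. dist c \<xi> < R}"
  then obtain \<xi>0 where "dist c \<xi>0 < R" by (metis (no_types, lifting) empty_Collect_eq finite.emptyI)
  then have R: "R > 0" using zero_le_dist[of c \<xi>0] by linarith
  define r0 where "r0 = rad (n+2)"
  have r0: "r0 > 0" by (simp add: r0_def)
  have r0e: "2 * r0 = rad (n+1)" unfolding r0_def using rad_succ[of "n+1"] by (simp add: add.commute)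
  define R' where "R' = R + r0"
  define \<delta> where "\<delta> = measure M (ball c R') / (C * (2*R'/r0) powr Q)"
  have mR: "measure M (ball c R') > 0" using R r0 by (intro measure_ball_pos) (simp add: R'_def)
  have \<delta>: "\<delta> > 0" unfolding \<delta>_def using mR C r0 R
    by (intro divide_pos_pos mult_pos_pos) (auto simp: R'_def)
  have low: "\<delta> \<le> measure M (ball \<xi> r0)" if "dist c \<xi> < R" for \<xi>
  proof -
    have "measure M (ball c R') \<le> C * (2*R'/r0) powr Q * measure M (ball \<xi> r0)"
      using that r0 R by (intro small_ball_lower) (auto simp: R'_def)
    then show ?thesis unfolding \<delta>_def using C r0 R
      by (simp add: divide_simps mult.commute R'_def)
  qed
  define N where "N = nat (ceiling (measure M (ball c R') / \<delta>)) + 1"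
  obtain F where F: "finite F" "card F = N" "F \<subseteq> {\<xi>\<in>S n. dist c \<xi> < R}"
    using infinite_arbitrarily_large[OF inf] by blast
  have disj: "disjoint_family_on (\<lambda>\<xi>. ball \<xi> r0) F"
  proof (auto simp: disjoint_family_on_def)
    fix \<xi> \<eta> z assume "\<xi> \<in> F" "\<eta> \<in> F" "\<xi> \<noteq> \<eta>" "dist \<xi> z < r0" "dist \<eta> z < r0"
    then have "dist \<xi> \<eta> < rad (n+1)" using r0e
      by (smt (verit) dist_commute dist_triangle)
    then show False using sep[of \<xi> n \<eta>] \<open>\<xi> \<in> F\<close> \<open>\<eta> \<in> F\<close> \<open>\<xi> \<noteq> \<eta>\<close> F(3) by auto
  qed
  have "(\<Sum>\<xi>\<in>F. emeasure M (ball \<xi> r0)) = emeasure M (\<Union>\<xi>\<in>F. ball \<xi> r0)"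
    using disj F by (intro sum_emeasure) auto
  also have "\<dots> \<le> emeasure M (ball c R')"
  proof (intro emeasure_mono)
    show "(\<Union>\<xi>\<in>F. ball \<xi> r0) \<subseteq> ball c R'"
    proof
      fix x assume "x \<in> (\<Union>\<xi>\<in>F. ball \<xi> r0)"
      then obtain \<xi> where "\<xi> \<in> F" "dist \<xi> x < r0" by auto
      with F(3) have "dist c \<xi> < R" by auto
      with \<open>dist \<xi> x < r0\<close> show "x \<in> ball c R'" unfolding R'_def
        using dist_triangle[of c x \<xi>] by auto
    qed
  qed auto
  finally have "ennreal (\<Sum>\<xi>\<in>F. measure M (ball \<xi> r0)) \<le> ennreal (measure M (ball c R'))"
    by (simp add: emeasure_ball)
  then have "(\<Sum>\<xi>\<in>F. measure M (ball \<xi> r0)) \<le> measure M (ball c R')"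
    by (simp add: ennreal_le_iff2 sum_nonneg) (smt (verit) measure_nonneg sum_nonneg)
  moreover have "(\<Sum>\<xi>\<in>F. \<delta>) \<le> (\<Sum>\<xi>\<in>F. measure M (ball \<xi> r0))"
    using F low by (intro sum_mono) auto
  ultimately have "real N * \<delta> \<le> measure M (ball c R')" using F by simp
  moreover have "measure M (ball c R') / \<delta> < real N"
    unfolding N_def by linarith
  ultimately show False using \<delta> by (simp add: divide_simps)
qed

end

lemma HX_iff[simp]: "(n, \<xi>) \<in> HX S \<longleftrightarrow> \<xi> \<in> S n" by (simp add: HX_def)
lemma Bx_eq[simp]: "Bx (n, \<xi>) = ball \<xi> (rad n)" by (simp add: Bx_def)

locale hf2 = hf M C Q S
  for M :: "'a::metric_space measure" and C Q :: real and S :: "int \<Rightarrow> 'a set" +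
  fixes \<psi> :: "int \<times> 'a \<Rightarrow> 'a \<Rightarrow> real" and C'' :: real
  assumes psi_nonneg: "\<And>x z. x \<in> HX S \<Longrightarrow> 0 \<le> \<psi> x z"
    and psi_supp: "\<And>x z. x \<in> HX S \<Longrightarrow> \<psi> x z \<noteq> 0 \<Longrightarrow> z \<in> Bx x"
    and psi_unity: "\<And>n z. ((\<lambda>\<xi>. \<psi> (n, \<xi>) z) has_sum 1) (S n)"
    and C'': "C'' > 0"
    and psi_lip: "\<And>x z w. x \<in> HX S \<Longrightarrow> \<bar>\<psi> x z - \<psi> x w\<bar> \<le> C'' * 2 powr (real_of_int (fst x)) * dist z w"
begin

definition A :: "int \<Rightarrow> 'a \<Rightarrow> 'a set" where
  "A n z = {\<xi>\<in>S n. dist z \<xi> < rad n}"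

lemma A_fin[simp]: "finite (A n z)"
  unfolding A_def by (rule finite_near)

lemma A_sub: "A n z \<subseteq> S n" unfolding A_def by auto

lemma A_iff: "\<xi> \<in> A n z \<longleftrightarrow> \<xi> \<in> S n \<and> z \<in> Bx (n, \<xi>)"
  unfolding A_def by (auto simp: dist_commute)

lemma psi_zero: "\<xi> \<in> S n \<Longrightarrow> \<xi> \<notin> A n z \<Longrightarrow> \<psi> (n, \<xi>) z = 0"
  using psi_supp[of "(n,\<xi>)" z] A_iff by auto

lemma psi_sum: "(\<Sum>\<xi>\<in>A n z. \<psi> (n, \<xi>) z) = 1"
proof -
  have "((\<lambda>\<xi>. \<psi> (n, \<xi>) z) has_sum 1) (A n z)"
    using psi_unity[of n z] by (subst has_sum_cong_neutral[where T="S n"]) (auto simp: A_sub[THEN subsetD] psi_zero)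
  moreover have "((\<lambda>\<xi>. \<psi> (n, \<xi>) z) has_sum (\<Sum>\<xi>\<in>A n z. \<psi> (n, \<xi>) z)) (A n z)" by simp
  ultimately show ?thesis using has_sum_unique by metis
qed

lemma psi_nonneg': "\<xi> \<in> S n \<Longrightarrow> 0 \<le> \<psi> (n, \<xi>) z"
  using psi_nonneg[of "(n,\<xi>)"] by simp

lemma psi_le1: "\<xi> \<in> S n \<Longrightarrow> \<psi> (n, \<xi>) z \<le> 1"
proof (cases "\<xi> \<in> A n z")
  case True
  assume "\<xi> \<in> S n"
  have "\<psi> (n, \<xi>) z \<le> (\<Sum>\<xi>\<in>A n z. \<psi> (n, \<xi>) z)"
    using True by (intro member_le_sum) (auto simp: psi_nonneg' A_sub[THEN subsetD])
  then show ?thesis by (simp add: psi_sum)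
qed (simp add: psi_zero)

lemma Tn_eq: "finite F \<Longrightarrow> A n z \<subseteq> F \<Longrightarrow> F \<subseteq> S n \<Longrightarrow>
   Tn S \<psi> n u z = (\<Sum>\<xi>\<in>F. u (n, \<xi>) * complex_of_real (\<psi> (n, \<xi>) z))"
  unfolding Tn_def
  by (subst infsum_cong_neutral[where T=F and g="\<lambda>\<xi>. u (n, \<xi>) * complex_of_real (\<psi> (n, \<xi>) z)"])
     (auto, metis psi_zero subsetD)

lemma Tn_A: "Tn S \<psi> n u z = (\<Sum>\<xi>\<in>A n z. u (n, \<xi>) * complex_of_real (\<psi> (n, \<xi>) z))"
  by (rule Tn_eq) (auto simp: A_sub)

lemma psi_cont: "\<xi> \<in> S n \<Longrightarrow> continuous_on UNIV (\<psi> (n, \<xi>))"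
proof -
  assume "\<xi> \<in> S n"
  then have L: "\<bar>\<psi> (n,\<xi>) z - \<psi> (n,\<xi>) w\<bar> \<le> (C'' * 2 powr real_of_int n) * dist z w" for z w
    using psi_lip[of "(n,\<xi>)" z w] by simp
  show ?thesis
    unfolding continuous_on_iff
  proof (intro ballI allI impI)
    fix z and e :: real assume e: "e > 0"
    define K where "K = C'' * 2 powr real_of_int n"
    have K: "K > 0" using C'' by (simp add: K_def)
    show "\<exists>d>0. \<forall>w\<in>UNIV. dist w z < d \<longrightarrow> dist (\<psi> (n, \<xi>) w) (\<psi> (n, \<xi>) z) < e"
    proof (intro exI[of _ "e/K"] conjI ballI impI)
      fix w assume "dist w z < e / K"
      then have "K * dist w z < e" using K by (simp add: field_simps)
      then show "dist (\<psi> (n, \<xi>) w) (\<psi> (n, \<xi>) z) < e"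
        using L[of w z] by (simp add: dist_real_def K_def)
    qed (use e K in auto)
  qed
qed

lemma Tn_cont: "continuous_on UNIV (Tn S \<psi> n u)"
proof -
  have "isCont (Tn S \<psi> n u) z0" for z0
  proof -
    define F where "F = {\<xi>\<in>S n. dist z0 \<xi> < 2 * rad n}"
    have F: "finite F" unfolding F_def by (rule finite_near)
    have eq: "Tn S \<psi> n u z = (\<Sum>\<xi>\<in>F. u (n, \<xi>) * complex_of_real (\<psi> (n, \<xi>) z))"
      if "z \<in> ball z0 (rad n)" for z
    proof (rule Tn_eq[OF F])
      show "A n z \<subseteq> F" unfolding A_def F_def
      proof safe
        fix \<xi> assume "\<xi> \<in> S n" "dist z \<xi> < rad n"
        then show "dist z0 \<xi> < 2 * rad n" using that dist_triangle[of z0 \<xi> z]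
          by (auto simp: dist_commute)
      qed
    qed (auto simp: F_def)
    have "continuous_on (ball z0 (rad n)) (\<lambda>z. \<Sum>\<xi>\<in>F. u (n, \<xi>) * complex_of_real (\<psi> (n, \<xi>) z))"
    proof (intro continuous_on_sum continuous_on_mult continuous_on_const continuous_on_of_real)
      fix \<xi> assume "\<xi> \<in> F"
      then show "continuous_on (ball z0 (rad n)) (\<psi> (n, \<xi>))"
        using continuous_on_subset[OF psi_cont[of \<xi> n]] by (auto simp: F_def)
    qed
    then have "continuous_on (ball z0 (rad n)) (Tn S \<psi> n u)"
      by (rule continuous_on_eq) (simp add: eq)
    then show ?thesis using continuous_on_eq_continuous_at[OF open_ball] rad_pos[of n]
      by (metis centre_in_ball)
  qed
  then show ?thesis by (simp add: continuous_at_imp_continuous_on)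
qed

lemma Tn_meas[measurable]: "Tn S \<psi> n u \<in> borel_measurable M"
  using Tn_cont by (intro sets_M_cong borel_measurable_continuous_onI)

lemma Tn_bound: "cmod (Tn S \<psi> n u z) \<le> (\<Sum>\<xi>\<in>A n z. cmod (u (n, \<xi>)))"
proof -
  have "cmod (Tn S \<psi> n u z) \<le> (\<Sum>\<xi>\<in>A n z. cmod (u (n, \<xi>) * complex_of_real (\<psi> (n, \<xi>) z)))"
    unfolding Tn_A by (rule norm_sum)
  also have "\<dots> \<le> (\<Sum>\<xi>\<in>A n z. cmod (u (n, \<xi>)))"
  proof (intro sum_mono)
    fix \<xi> assume "\<xi> \<in> A n z"
    then have "\<xi> \<in> S n" using A_sub by auto
    then show "cmod (u (n, \<xi>) * complex_of_real (\<psi> (n, \<xi>) z)) \<le> cmod (u (n, \<xi>))"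
      using psi_le1 psi_nonneg' by (simp add: norm_mult mult_left_le)
  qed
  finally show ?thesis .
qed

end

definition ddu :: "(int \<Rightarrow> 'a::metric_space set) \<Rightarrow> (int \<times> 'a \<Rightarrow> complex) \<Rightarrow> int \<times> 'a \<Rightarrow> real" where
  "ddu S u x = sqrt (\<Sum>y\<in>nbrs S x. (cmod (u y - u x))\<^sup>2)"

lemma ddu_nonneg: "ddu S u x \<ge> 0" unfolding ddu_def by (simp add: sum_nonneg)

context hf
begin

lemma nbrs_fin: "finite (nbrs S x)"
proof -
  have "nbrs S x \<subseteq> (SIGMA k:{fst x - 1 .. fst x + 1}. {\<eta> \<in> S k. dist (snd x) \<eta> < 3 * rad (fst x)})"
  proof
    fix y assume y: "y \<in> nbrs S x"
    obtain k \<eta> where yk: "y = (k, \<eta>)" by force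
    from y obtain z where z: "z \<in> Bx x" "z \<in> Bx y" and k: "\<bar>fst x - k\<bar> \<le> 1" and "\<eta> \<in> S k"
      unfolding nbrs_def yk by (auto simp: HX_def)
    have "rad k \<le> rad (fst x - 1)" using k by (intro rad_mono) auto
    also have "rad (fst x - 1) = 2 * rad (fst x)" using rad_succ[of "fst x - 1"] by simp
    finally have "dist (snd x) \<eta> < 3 * rad (fst x)"
      using z dist_triangle[of "snd x" \<eta> z] unfolding yk Bx_def by (auto simp: dist_commute)
    then show "y \<in> (SIGMA k:{fst x - 1 .. fst x + 1}. {\<eta> \<in> S k. dist (snd x) \<eta> < 3 * rad (fst x)})"
      using k \<open>\<eta> \<in> S k\<close> yk by auto
  qed
  moreover have "finite (SIGMA k:{fst x - 1 .. fst x + 1}. {\<eta> \<in> S k. dist (snd x) \<eta> < 3 * rad (fst x)})"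
    by (intro finite_SigmaI finite_near) auto
  ultimately show ?thesis by (rule finite_subset)
qed

lemma du_eq: "du S u x = ennreal (ddu S u x)"
proof -
  have "(\<integral>\<^sup>+ y. ennreal ((cmod (u y - u x))\<^sup>2) \<partial>count_space (nbrs S x))
        = ennreal (\<Sum>y\<in>nbrs S x. (cmod (u y - u x))\<^sup>2)"
    by (simp add: nn_integral_count_space_finite[OF nbrs_fin])
  then show ?thesis unfolding du_def epow_def ddu_def
    by (simp add: sum_nonneg powr_half_sqrt)
qed

lemma nb_le: "y \<in> nbrs S x \<Longrightarrow> cmod (u y - u x) \<le> ddu S u x"
proof -
  assume y: "y \<in> nbrs S x"
  have "(cmod (u y - u x))\<^sup>2 \<le> (\<Sum>y\<in>nbrs S x. (cmod (u y - u x))\<^sup>2)"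
    using y nbrs_fin by (intro member_le_sum) auto
  then have "sqrt ((cmod (u y - u x))\<^sup>2) \<le> ddu S u x"
    unfolding ddu_def by (rule real_sqrt_le_mono)
  then show ?thesis by simp
qed

end

context hf2
begin

lemma Tdiff: "cmod (Tn S \<psi> (n+1) u z - Tn S \<psi> n u z) \<le> (\<Sum>\<xi>\<in>A n z. ddu S u (n, \<xi>))"
proof -
  define a where "a \<xi> = \<psi> (n, \<xi>) z" for \<xi>
  define b where "b \<eta> = \<psi> (n+1, \<eta>) z" for \<eta>
  define T1 where "T1 = Tn S \<psi> (n+1) u z"
  have T1: "T1 = (\<Sum>\<eta>\<in>A (n+1) z. u (n+1, \<eta>) * complex_of_real (b \<eta>))"
    unfolding T1_def b_def by (rule Tn_A)
  have T0: "Tn S \<psi> n u z = (\<Sum>\<xi>\<in>A n z. u (n, \<xi>) * complex_of_real (a \<xi>))"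
    unfolding a_def by (rule Tn_A)
  have sa: "(\<Sum>\<xi>\<in>A n z. a \<xi>) = 1" unfolding a_def by (rule psi_sum)
  have sb: "(\<Sum>\<eta>\<in>A (n+1) z. b \<eta>) = 1" unfolding b_def by (rule psi_sum)
  have inner: "(\<Sum>\<eta>\<in>A (n+1) z. complex_of_real (a \<xi> * b \<eta>) * (u (n+1, \<eta>) - u (n, \<xi>)))
      = complex_of_real (a \<xi>) * (T1 - u (n, \<xi>))" for \<xi>
  proof -
    have "(\<Sum>\<eta>\<in>A (n+1) z. complex_of_real (a \<xi> * b \<eta>) * (u (n+1, \<eta>) - u (n, \<xi>)))
        = complex_of_real (a \<xi>) * ((\<Sum>\<eta>\<in>A (n+1) z. u (n+1, \<eta>) * complex_of_real (b \<eta>))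
            - (\<Sum>\<eta>\<in>A (n+1) z. complex_of_real (b \<eta>)) * u (n, \<xi>))"
      by (simp add: sum_distrib_left sum_distrib_right sum_subtractf algebra_simps)
    also have "(\<Sum>\<eta>\<in>A (n+1) z. complex_of_real (b \<eta>)) = 1"
      using sb by (metis of_real_1 of_real_sum)
    finally show ?thesis using T1 by simp
  qed
  have eq: "T1 - Tn S \<psi> n u z
     = (\<Sum>\<xi>\<in>A n z. \<Sum>\<eta>\<in>A (n+1) z. complex_of_real (a \<xi> * b \<eta>) * (u (n+1, \<eta>) - u (n, \<xi>)))"
  proof -
    have "(\<Sum>\<xi>\<in>A n z. \<Sum>\<eta>\<in>A (n+1) z. complex_of_real (a \<xi> * b \<eta>) * (u (n+1, \<eta>) - u (n, \<xi>)))
       = (\<Sum>\<xi>\<in>A n z. complex_of_real (a \<xi>) * (T1 - u (n, \<xi>)))" by (rule sum.cong[OF refl]) (rule inner)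
    also have "\<dots> = (\<Sum>\<xi>\<in>A n z. complex_of_real (a \<xi>)) * T1 - Tn S \<psi> n u z"
      unfolding T0 by (simp add: sum_distrib_right sum_subtractf algebra_simps sum_distrib_left[symmetric])
    also have "(\<Sum>\<xi>\<in>A n z. complex_of_real (a \<xi>)) = 1"
      using sa by (metis of_real_1 of_real_sum)
    finally show ?thesis by simp
  qed
  have anonneg: "\<xi> \<in> A n z \<Longrightarrow> 0 \<le> a \<xi>" for \<xi> unfolding a_def using A_sub psi_nonneg' by blast
  have bnonneg: "\<eta> \<in> A (n+1) z \<Longrightarrow> 0 \<le> b \<eta>" for \<eta> unfolding b_def using A_sub psi_nonneg' by blast
  have "cmod (T1 - Tn S \<psi> n u z)
      \<le> (\<Sum>\<xi>\<in>A n z. \<Sum>\<eta>\<in>A (n+1) z. cmod (complex_of_real (a \<xi> * b \<eta>) * (u (n+1, \<eta>) - u (n, \<xi>))))"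
    unfolding eq by (rule order.trans[OF norm_sum sum_mono[OF norm_sum]])
  also have "\<dots> \<le> (\<Sum>\<xi>\<in>A n z. \<Sum>\<eta>\<in>A (n+1) z. (a \<xi> * b \<eta>) * ddu S u (n, \<xi>))"
  proof (intro sum_mono)
    fix \<xi> \<eta> assume \<xi>: "\<xi> \<in> A n z" and \<eta>: "\<eta> \<in> A (n+1) z"
    have "(n+1, \<eta>) \<in> nbrs S (n, \<xi>)"
      using \<xi> \<eta> unfolding nbrs_def A_iff by (auto simp: HX_def)
    then have "cmod (u (n+1, \<eta>) - u (n, \<xi>)) \<le> ddu S u (n, \<xi>)" by (rule nb_le)
    then show "cmod (complex_of_real (a \<xi> * b \<eta>) * (u (n+1, \<eta>) - u (n, \<xi>))) \<le> (a \<xi> * b \<eta>) * ddu S u (n, \<xi>)"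
      using anonneg[OF \<xi>] bnonneg[OF \<eta>] by (simp add: norm_mult mult_left_mono)
  qed
  also have "\<dots> = (\<Sum>\<xi>\<in>A n z. a \<xi> * ddu S u (n, \<xi>))"
    by (simp add: sum_distrib_left[symmetric] sum_distrib_right[symmetric] sb mult.commute mult.left_commute)
  also have "\<dots> \<le> (\<Sum>\<xi>\<in>A n z. ddu S u (n, \<xi>))"
  proof (intro sum_mono)
    fix \<xi> assume "\<xi> \<in> A n z"
    then have "a \<xi> \<le> 1" unfolding a_def using A_sub psi_le1 by blast
    then show "a \<xi> * ddu S u (n, \<xi>) \<le> ddu S u (n, \<xi>)"
      using ddu_nonneg[of S u "(n,\<xi>)"] anonneg[OF \<open>\<xi> \<in> A n z\<close>] by (simp add: mult_left_le_one_le)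
  qed
  finally show ?thesis unfolding T1_def .
qed

lemma Tzero: "\<xi>0 \<in> S n \<Longrightarrow> z \<in> Bx (n, \<xi>0) \<Longrightarrow> cmod (Tn S \<psi> n u z - u (n, \<xi>0)) \<le> ddu S u (n, \<xi>0)"
proof -
  assume x: "\<xi>0 \<in> S n" "z \<in> Bx (n, \<xi>0)"
  define a where "a \<xi> = \<psi> (n, \<xi>) z" for \<xi>
  have sa: "(\<Sum>\<xi>\<in>A n z. a \<xi>) = 1" unfolding a_def by (rule psi_sum)
  have anonneg: "\<xi> \<in> A n z \<Longrightarrow> 0 \<le> a \<xi>" for \<xi> unfolding a_def using A_sub psi_nonneg' by blast
  have "Tn S \<psi> n u z - u (n, \<xi>0) = (\<Sum>\<xi>\<in>A n z. complex_of_real (a \<xi>) * (u (n, \<xi>) - u (n, \<xi>0)))"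
  proof -
    have "(\<Sum>\<xi>\<in>A n z. complex_of_real (a \<xi>) * (u (n, \<xi>) - u (n, \<xi>0)))
       = (\<Sum>\<xi>\<in>A n z. u (n, \<xi>) * complex_of_real (a \<xi>)) - (\<Sum>\<xi>\<in>A n z. complex_of_real (a \<xi>) * u (n, \<xi>0))"
      by (simp add: sum_subtractf algebra_simps)
    also have "(\<Sum>\<xi>\<in>A n z. complex_of_real (a \<xi>) * u (n, \<xi>0)) = (\<Sum>\<xi>\<in>A n z. complex_of_real (a \<xi>)) * u (n, \<xi>0)"
      by (simp add: sum_distrib_right)
    also have "(\<Sum>\<xi>\<in>A n z. complex_of_real (a \<xi>)) = 1"
      using sa by (metis of_real_1 of_real_sum)
    finally show ?thesis unfolding a_def Tn_A by simp
  qed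
  then have "cmod (Tn S \<psi> n u z - u (n, \<xi>0)) \<le> (\<Sum>\<xi>\<in>A n z. cmod (complex_of_real (a \<xi>) * (u (n, \<xi>) - u (n, \<xi>0))))"
    by (simp add: norm_sum)
  also have "\<dots> \<le> (\<Sum>\<xi>\<in>A n z. a \<xi> * ddu S u (n, \<xi>0))"
  proof (intro sum_mono)
    fix \<xi> assume \<xi>: "\<xi> \<in> A n z"
    have "cmod (u (n, \<xi>) - u (n, \<xi>0)) \<le> ddu S u (n, \<xi>0)"
    proof (cases "\<xi> = \<xi>0")
      case True then show ?thesis using ddu_nonneg by simp
    next
      case False
      have "(n, \<xi>) \<in> nbrs S (n, \<xi>0)"
        using \<xi> x False unfolding nbrs_def A_iff by (auto simp: HX_def)
      then show ?thesis by (rule nb_le)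
    qed
    then show "cmod (complex_of_real (a \<xi>) * (u (n, \<xi>) - u (n, \<xi>0))) \<le> a \<xi> * ddu S u (n, \<xi>0)"
      using anonneg[OF \<xi>] by (simp add: norm_mult mult_left_mono)
  qed
  also have "\<dots> = ddu S u (n, \<xi>0)" by (simp add: sum_distrib_right[symmetric] sa)
  finally show ?thesis .
qed

end

lemma epow_mono: "a \<le> b \<Longrightarrow> 0 \<le> r \<Longrightarrow> epow a r \<le> epow b r"
proof (cases "b = \<infinity>")
  case False
  assume ab: "a \<le> b" and r: "0 \<le> r"
  then have "a \<noteq> \<infinity>" using False top.extremum_unique by auto
  then have "enn2real a \<le> enn2real b" using ab False by (intro enn2real_mono) (auto simp: less_top)
  then show ?thesis using False \<open>a \<noteq> \<infinity>\<close> r unfolding epow_def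
    by (simp add: ennreal_leI powr_mono2)
qed (simp add: epow_def)

lemma epow_ennreal: "x \<ge> 0 \<Longrightarrow> epow (ennreal x) r = ennreal (x powr r)"
  by (simp add: epow_def)

lemma epow_epow_inv: "r > 0 \<Longrightarrow> epow (epow a r) (1/r) = a"
proof (cases "a = \<infinity>")
  case False
  assume r: "r > 0"
  obtain x where x: "a = ennreal x" "x \<ge> 0" using False by (cases a) auto
  then show ?thesis using r
    by (simp add: epow_ennreal powr_powr powr_one)
qed (simp add: epow_def)

lemma epow_top[simp]: "epow \<infinity> r = \<infinity>" by (simp add: epow_def)

lemma ncs_ind: "(\<integral>\<^sup>+x. f x \<partial>count_space X) = (\<integral>\<^sup>+x. f x * indicator X x \<partial>count_space UNIV)"
proof (cases "X = UNIV")
  case True then show ?thesis by simp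
next
  case False
  then have "NO_MATCH (UNIV::'a set) X" by simp
  then show ?thesis by (rule nn_integral_count_space_indicator)
qed

lemma ncs_ge: "finite F \<Longrightarrow> F \<subseteq> X \<Longrightarrow> (\<Sum>x\<in>F. f x) \<le> (\<integral>\<^sup>+x. f x \<partial>count_space X)"
proof -
  assume F: "finite F" "F \<subseteq> X"
  have "(\<Sum>x\<in>F. f x) = (\<integral>\<^sup>+x. f x * indicator F x \<partial>count_space UNIV)"
    using F by (simp add: nn_integral_count_space_finite ncs_ind[where f=f and X=F, symmetric])
  also have "\<dots> \<le> (\<integral>\<^sup>+x. f x * indicator X x \<partial>count_space UNIV)"
    using F by (intro nn_integral_mono) (auto simp: indicator_def)
  finally show ?thesis by (simp only: ncs_ind[where f=f and X=X])
qed

lemma ncs_ge1: "x \<in> X \<Longrightarrow> f x \<le> (\<integral>\<^sup>+x. f x \<partial>count_space X)"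
  using ncs_ge[of "{x}" X f] by simp

lemma sum_powr_le:
  fixes c :: "'b \<Rightarrow> real"
  assumes "finite F" "\<And>i. i \<in> F \<Longrightarrow> c i \<ge> 0" "r \<ge> 1"
  shows "(\<Sum>i\<in>F. c i powr r) \<le> (\<Sum>i\<in>F. c i) powr r"
proof -
  define T where "T = (\<Sum>i\<in>F. c i)"
  have T: "T \<ge> 0" unfolding T_def using assms by (simp add: sum_nonneg)
  have "c i powr r \<le> c i * T powr (r - 1)" if i: "i \<in> F" for i
  proof (cases "c i = 0")
    case True then show ?thesis by simp
  next
    case False
    then have ci: "c i > 0" using assms(2)[OF i] by simp
    have "c i \<le> T" unfolding T_def using assms i by (intro member_le_sum) auto
    then have "c i powr (r - 1) \<le> T powr (r - 1)" using assms ci by (intro powr_mono2) auto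
    moreover have "c i powr r = c i * c i powr (r - 1)"
      using ci by (simp add: powr_diff powr_one)
    ultimately show ?thesis using ci by simp
  qed
  then have "(\<Sum>i\<in>F. c i powr r) \<le> (\<Sum>i\<in>F. c i * T powr (r - 1))" by (rule sum_mono)
  also have "\<dots> = T * T powr (r - 1)" by (simp add: T_def sum_distrib_right)
  also have "\<dots> = T powr r"
  proof (cases "T = 0")
    case True then show ?thesis using assms by simp
  next
    case False then show ?thesis using T by (simp add: powr_diff powr_one)
  qed
  finally show ?thesis by (simp add: T_def)
qed

lemma Inorm_ge:
  assumes q: "0 < q"
  shows "ennreal (2 powr (real_of_int n * s)) * Lpn M p (level_fun S v n) \<le> Inorm M S s p q v"
proof (cases "q = \<infinity>")
  case True show ?thesis unfolding Inorm_def if_P[OF True] by (rule SUP_upper) simp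
next
  case False
  define a where "a k = ennreal (2 powr (real_of_int k * s)) * Lpn M p (level_fun S v k)" for k
  define r where "r = enn2real q"
  have r: "r > 0" using q False by (simp add: r_def enn2real_positive_iff less_top)
  have "epow (a n) r \<le> (\<integral>\<^sup>+k. epow (a k) r \<partial>count_space UNIV)"
    by (rule ncs_ge1) simp
  then have "epow (epow (a n) r) (1/r) \<le> epow (\<integral>\<^sup>+k. epow (a k) r \<partial>count_space UNIV) (1/r)"
    using r by (intro epow_mono) auto
  moreover have "epow (epow (a n) r) (1/r) = a n" by (rule epow_epow_inv[OF r])
  moreover have "Inorm M S s p q v = epow (\<integral>\<^sup>+k. epow (a k) r \<partial>count_space UNIV) (1/r)"
    unfolding Inorm_def if_not_P[OF False] a_def r_def by (rule refl)
  ultimately have "a n \<le> Inorm M S s p q v" by metis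
  then show ?thesis unfolding a_def .
qed


context hf2
begin

definition J :: "'a \<Rightarrow> int \<Rightarrow> int \<Rightarrow> 'a set" where
  "J c m n = {\<xi>\<in>S n. dist c \<xi> < 2 * rad m}"

definition GJ :: "(int \<times> 'a \<Rightarrow> real) \<Rightarrow> 'a \<Rightarrow> int \<Rightarrow> int \<Rightarrow> 'a \<Rightarrow> real" where
  "GJ v c m n z = (\<Sum>\<xi>\<in>J c m n. v (n, \<xi>) * indicator (ball \<xi> (rad n)) z)"

definition Gr :: "(int \<times> 'a \<Rightarrow> real) \<Rightarrow> int \<Rightarrow> 'a \<Rightarrow> real" where
  "Gr v n z = (\<Sum>\<xi>\<in>A n z. v (n, \<xi>))"

lemma J_fin[simp]: "finite (J c m n)" unfolding J_def by (rule finite_near)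

lemma J_sub: "J c m n \<subseteq> S n" unfolding J_def by auto

lemma GJ_eq: "GJ v c m n z = (\<Sum>\<xi>\<in>J c m n \<inter> A n z. v (n, \<xi>))"
  unfolding GJ_def
  by (subst sum.inter_restrict[OF J_fin]) (auto intro!: sum.cong simp: A_def J_def dist_commute indicator_def)

lemma GJ_le_Gr: "(\<And>x. v x \<ge> 0) \<Longrightarrow> GJ v c m n z \<le> Gr v n z"
  unfolding GJ_eq Gr_def by (intro sum_mono2) auto

lemma A_sub_J: "m \<le> n \<Longrightarrow> z \<in> ball c (rad m) \<Longrightarrow> A n z \<subseteq> J c m n"
proof
  fix \<xi> assume mn: "m \<le> n" and z: "z \<in> ball c (rad m)" and \<xi>: "\<xi> \<in> A n z"
  have "rad n \<le> rad m" using mn by (rule rad_mono)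
  then show "\<xi> \<in> J c m n" using \<xi> z dist_triangle[of c \<xi> z] unfolding A_def J_def by auto
qed

lemma GJ_eq_Gr: "m \<le> n \<Longrightarrow> z \<in> ball c (rad m) \<Longrightarrow> GJ v c m n z = Gr v n z"
  unfolding GJ_eq Gr_def using A_sub_J[of m n z c] by (simp add: Int_absorb1)

lemma Gr_nonneg: "(\<And>x. v x \<ge> 0) \<Longrightarrow> Gr v n z \<ge> 0"
  unfolding Gr_def by (simp add: sum_nonneg)

lemma GJ_nonneg: "(\<And>x. v x \<ge> 0) \<Longrightarrow> GJ v c m n z \<ge> 0"
  unfolding GJ_def by (simp add: sum_nonneg)

lemma GJ_meas[measurable]: "GJ v c m n \<in> borel_measurable M"
  unfolding GJ_def by measurable

lemma Gr_le_level: "(\<And>x. v x \<ge> 0) \<Longrightarrow> ennreal (Gr v n z) \<le> level_fun S (\<lambda>x. ennreal (v x)) n z"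
proof -
  assume v: "\<And>x. v x \<ge> 0"
  have "ennreal (Gr v n z) = (\<Sum>\<xi>\<in>A n z. ennreal (v (n, \<xi>)) * indicator (Bx (n, \<xi>)) z)"
    unfolding Gr_def using v by (simp add: A_iff indicator_def)
  also have "\<dots> \<le> level_fun S (\<lambda>x. ennreal (v x)) n z"
    unfolding level_fun_def by (rule ncs_ge) (auto simp: A_sub)
  finally show ?thesis .
qed

lemma int_GJ: "(\<And>x. v x \<ge> 0) \<Longrightarrow>
  (\<integral>\<^sup>+z. ennreal (GJ v c m n z) \<partial>M) = ennreal (\<Sum>\<xi>\<in>J c m n. v (n, \<xi>) * measure M (ball \<xi> (rad n)))"
proof -
  assume v: "\<And>x. v x \<ge> 0"
  have "(\<integral>\<^sup>+z. ennreal (GJ v c m n z) \<partial>M)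
      = (\<integral>\<^sup>+z. (\<Sum>\<xi>\<in>J c m n. ennreal (v (n, \<xi>)) * indicator (ball \<xi> (rad n)) z) \<partial>M)"
    unfolding GJ_def using v
    by (intro nn_integral_cong) (simp add: ennreal_mult ennreal_indicator)
  also have "\<dots> = (\<Sum>\<xi>\<in>J c m n. ennreal (v (n, \<xi>)) * emeasure M (ball \<xi> (rad n)))"
    by (subst nn_integral_sum) (auto simp: nn_integral_cmult_indicator)
  also have "\<dots> = ennreal (\<Sum>\<xi>\<in>J c m n. v (n, \<xi>) * measure M (ball \<xi> (rad n)))"
    using v by (subst sum_ennreal[symmetric]) (auto intro!: sum.cong simp: emeasure_ball ennreal_mult)
  finally show ?thesis .
qed

lemma set_int_Gr: "(\<And>x. v x \<ge> 0) \<Longrightarrow> m \<le> n \<Longrightarrow>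
  (\<integral>\<^sup>+z\<in>ball c (rad m). ennreal (Gr v n z) \<partial>M) = (\<integral>\<^sup>+z\<in>ball c (rad m). ennreal (GJ v c m n z) \<partial>M)"
  by (intro nn_integral_cong) (auto simp: GJ_eq_Gr indicator_def)

lemma set_int_Gr_le: "(\<And>x. v x \<ge> 0) \<Longrightarrow> m \<le> n \<Longrightarrow>
  (\<integral>\<^sup>+z\<in>ball c (rad m). ennreal (Gr v n z) \<partial>M) \<le> ennreal (\<Sum>\<xi>\<in>J c m n. v (n, \<xi>) * measure M (ball \<xi> (rad n)))"
proof -
  assume v: "\<And>x. v x \<ge> 0" and mn: "m \<le> n"
  have "(\<integral>\<^sup>+z\<in>ball c (rad m). ennreal (GJ v c m n z) \<partial>M) \<le> (\<integral>\<^sup>+z. ennreal (GJ v c m n z) \<partial>M)"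
    by (intro nn_integral_mono) (auto simp: indicator_def)
  then show ?thesis using set_int_Gr[OF v mn] int_GJ[OF v] by simp
qed

lemma young1:
  fixes x t P :: real
  assumes "x \<ge> 0" "t > 0" "P \<ge> 1"
  shows "x \<le> t + t powr (1 - P) * x powr P"
proof (cases "x \<le> t")
  case True then show ?thesis using assms by (smt (verit) mult_nonneg_nonneg powr_ge_zero)
next
  case False
  then have xt: "x / t \<ge> 1" using assms by simp
  have "(x/t) powr 1 \<le> (x/t) powr P" using xt assms by (intro powr_mono) auto
  then have "x / t \<le> x powr P / t powr P" using xt assms by (simp add: powr_divide)
  then have "x \<le> t * (x powr P / t powr P)" using assms by (simp add: divide_simps mult.commute)
  also have "\<dots> = t powr (1 - P) * x powr P" using assms by (simp add: powr_diff)
  finally show ?thesis using assms by simp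
qed

end

lemma epow_top'[simp]: "epow top r = top" by (simp add: epow_def)

context hf2
begin

lemma measure_ball_mono: "r \<le> R \<Longrightarrow> measure M (ball c r) \<le> measure M (ball c R)"
proof (cases "R > 0")
  case True
  assume "r \<le> R"
  then show ?thesis using balls[OF True, of c]
    by (intro measure_mono_fmeasurable) (auto simp: fmeasurable_def)
next
  case False
  assume "r \<le> R"
  then have "ball c r = {}" "ball c R = {}" using False by auto
  then show ?thesis by (metis order_refl)
qed

lemma rad_4: "rad n = 4 * rad (n+2)"
  using rad_succ[of n] rad_succ[of "n+1"] by (simp add: algebra_simps)

lemma rad_ratio: "rad m / rad n = 2 powr (real_of_int (n - m))"
  by (simp add: rad_def powr_diff[symmetric] algebra_simps)

lemma est_inf:
  assumes v: "\<And>x. v x \<ge> 0" and p: "p = \<infinity>"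
  shows "(\<integral>\<^sup>+z\<in>ball c (rad m). ennreal (Gr v n z) \<partial>M)
    \<le> ennreal (measure M (ball c (rad m))) * Lpn M p (level_fun S (\<lambda>x. ennreal (v x)) n)"
proof -
  define lev where "lev = level_fun S (\<lambda>x. ennreal (v x)) n"
  have L: "Lpn M p lev = esssup M lev" using p by (simp add: Lpn_def)
  have "(\<integral>\<^sup>+z\<in>ball c (rad m). ennreal (Gr v n z) \<partial>M) \<le> (\<integral>\<^sup>+z. esssup M lev * indicator (ball c (rad m)) z \<partial>M)"
  proof (rule nn_integral_mono_AE)
    show "AE z in M. ennreal (Gr v n z) * indicator (ball c (rad m)) z \<le> esssup M lev * indicator (ball c (rad m)) z"
      using esssup_AE[of lev M]
    proof eventually_elim
      case (elim z)
      then show ?case using Gr_le_level[where v=v, OF v, where n=n and z=z] unfolding lev_def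
        by (auto simp: indicator_def)
    qed
  qed
  also have "\<dots> = esssup M lev * emeasure M (ball c (rad m))"
    by (simp add: nn_integral_cmult_indicator)
  finally show ?thesis using L unfolding lev_def by (simp add: emeasure_ball mult.commute)
qed

lemma est_ge1:
  assumes v: "\<And>x. v x \<ge> 0" and mn: "m \<le> n" and p: "p \<noteq> \<infinity>" and P: "enn2real p \<ge> 1"
  shows "(\<integral>\<^sup>+z\<in>ball c (rad m). ennreal (Gr v n z) \<partial>M)
    \<le> ennreal (2 * measure M (ball c (rad m)) powr (1 - 1 / enn2real p)) * Lpn M p (level_fun S (\<lambda>x. ennreal (v x)) n)"
proof -
  define P where "P = enn2real p"
  define lev where "lev = level_fun S (\<lambda>x. ennreal (v x)) n"
  define \<mu> where "\<mu> = measure M (ball c (rad m))"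
  define I where "I = (\<integral>\<^sup>+z. epow (lev z) P \<partial>M)"
  define K where "K = 2 * \<mu> powr (1 - 1 / P)"
  have P1: "P \<ge> 1" using P by (simp add: P_def)
  have \<mu>: "\<mu> > 0" unfolding \<mu>_def by (rule measure_ball_pos) simp
  have K: "K > 0" unfolding K_def using \<mu> by simp
  have L: "Lpn M p lev = epow I (1/P)" using p by (simp add: Lpn_def P_def I_def)
  have LHS: "(\<integral>\<^sup>+z\<in>ball c (rad m). ennreal (Gr v n z) \<partial>M) = (\<integral>\<^sup>+z\<in>ball c (rad m). ennreal (GJ v c m n z) \<partial>M)"
    by (rule set_int_Gr[where v=v, OF v mn])
  show ?thesis
  proof (cases "I = \<infinity>")
    case True
    then show ?thesis using K unfolding lev_def[symmetric] P_def[symmetric] \<mu>_def[symmetric] K_def[symmetric] L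
      by (simp add: ennreal_mult_top)
  next
    case False
    then obtain Ir where Ir: "I = ennreal Ir" "Ir \<ge> 0" by (cases I) auto
    have F1: "(\<integral>\<^sup>+z. ennreal (GJ v c m n z powr P) \<partial>M) \<le> ennreal Ir"
      unfolding Ir(1)[symmetric] I_def
    proof (intro nn_integral_mono)
      fix z
      have "ennreal (GJ v c m n z) \<le> lev z"
        using GJ_le_Gr[where v=v, OF v, of c m n z] Gr_le_level[where v=v, OF v, where n=n and z=z] unfolding lev_def
        by (meson ennreal_leI order_trans)
      then have "epow (ennreal (GJ v c m n z)) P \<le> epow (lev z) P" using P1 by (intro epow_mono) auto
      then show "ennreal (GJ v c m n z powr P) \<le> epow (lev z) P"
        using GJ_nonneg[where v=v, OF v] by (simp add: epow_ennreal)
    qed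
    have F2: "(\<integral>\<^sup>+z\<in>ball c (rad m). ennreal (GJ v c m n z) \<partial>M) \<le> ennreal (t * \<mu> + t powr (1 - P) * Ir)"
      if t: "t > 0" for t
    proof -
      have "(\<integral>\<^sup>+z\<in>ball c (rad m). ennreal (GJ v c m n z) \<partial>M)
          \<le> (\<integral>\<^sup>+z. ennreal t * indicator (ball c (rad m)) z + ennreal (t powr (1 - P)) * ennreal (GJ v c m n z powr P) \<partial>M)"
      proof (intro nn_integral_mono)
        fix z
        have "GJ v c m n z \<le> t + t powr (1 - P) * GJ v c m n z powr P"
          using young1[OF GJ_nonneg[where v=v, OF v] t P1] .
        then have "ennreal (GJ v c m n z) \<le> ennreal (t + t powr (1 - P) * GJ v c m n z powr P)"
          by (rule ennreal_leI)
        also have "\<dots> = ennreal t + ennreal (t powr (1 - P)) * ennreal (GJ v c m n z powr P)"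
          using t by (simp add: ennreal_plus ennreal_mult)
        finally have "ennreal (GJ v c m n z) \<le> ennreal t + ennreal (t powr (1 - P)) * ennreal (GJ v c m n z powr P)" .
        then show "ennreal (GJ v c m n z) * indicator (ball c (rad m)) z
            \<le> ennreal t * indicator (ball c (rad m)) z + ennreal (t powr (1 - P)) * ennreal (GJ v c m n z powr P)"
          by (auto simp: indicator_def)
      qed
      also have "\<dots> = ennreal t * emeasure M (ball c (rad m)) + ennreal (t powr (1 - P)) * (\<integral>\<^sup>+z. ennreal (GJ v c m n z powr P) \<partial>M)"
        by (subst nn_integral_add) (auto simp: nn_integral_cmult_indicator nn_integral_cmult)
      also have "\<dots> \<le> ennreal t * ennreal \<mu> + ennreal (t powr (1 - P)) * ennreal Ir"
        unfolding \<mu>_def emeasure_ball by (intro add_mono mult_left_mono F1) auto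
      also have "\<dots> = ennreal (t * \<mu> + t powr (1 - P) * Ir)"
        using t \<mu> Ir by (simp add: ennreal_plus ennreal_mult)
      finally show ?thesis .
    qed
    show ?thesis
    proof (cases "Ir = 0")
      case True
      have "(\<integral>\<^sup>+z\<in>ball c (rad m). ennreal (GJ v c m n z) \<partial>M) \<le> 0"
      proof (rule ennreal_le_epsilon)
        fix e :: real assume e: "0 < e"
        have "(\<integral>\<^sup>+z\<in>ball c (rad m). ennreal (GJ v c m n z) \<partial>M) \<le> ennreal ((e / \<mu>) * \<mu> + (e / \<mu>) powr (1 - P) * Ir)"
          using e \<mu> by (intro F2) auto
        then show "(\<integral>\<^sup>+z\<in>ball c (rad m). ennreal (GJ v c m n z) \<partial>M) \<le> 0 + ennreal e"
          using True \<mu> by simp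
      qed
      then show ?thesis using LHS by simp
    next
      case False
      then have Irp: "Ir > 0" using Ir by simp
      define t where "t = (Ir / \<mu>) powr (1 / P)"
      have t: "t > 0" using Irp \<mu> by (simp add: t_def)
      have tP: "t powr P = Ir / \<mu>" unfolding t_def using P1 Irp \<mu> by (simp add: powr_powr)
      have "t powr (1 - P) * Ir = t * \<mu>"
        using t tP Irp \<mu> by (simp add: powr_diff powr_one divide_simps mult.commute)
      moreover have "t * \<mu> = \<mu> powr (1 - 1/P) * Ir powr (1/P)"
      proof -
        have "t * \<mu> = Ir powr (1/P) * (\<mu> / \<mu> powr (1/P))"
          unfolding t_def using Irp \<mu> by (simp add: powr_divide)
        also have "\<mu> / \<mu> powr (1/P) = \<mu> powr (1 - 1/P)"
          using \<mu> by (subst powr_diff) (simp add: powr_one)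
        finally show ?thesis by simp
      qed
      ultimately have "t * \<mu> + t powr (1 - P) * Ir = K * Ir powr (1/P)"
        unfolding K_def by simp
      then have "(\<integral>\<^sup>+z\<in>ball c (rad m). ennreal (GJ v c m n z) \<partial>M) \<le> ennreal (K * Ir powr (1/P))"
        using F2[OF t] by simp
      also have "\<dots> = ennreal K * epow I (1/P)"
        using Ir K by (simp add: epow_ennreal ennreal_mult)
      finally show ?thesis using LHS L unfolding K_def \<mu>_def P_def lev_def by simp
    qed
  qed
qed

end

context hf2
begin

definition lam :: "'a \<Rightarrow> int \<Rightarrow> int \<Rightarrow> real" where
  "lam c m n = measure M (ball c (rad m)) / (C * (16 * 2 powr real_of_int (n - m)) powr Q)"

lemma lam_pos: "lam c m n > 0"
  unfolding lam_def using C measure_ball_pos[of "rad m" c] by (intro divide_pos_pos mult_pos_pos) auto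

lemma lam_le:
  assumes mn: "m \<le> n" and \<xi>: "\<xi> \<in> J c m n"
  shows "lam c m n \<le> measure M (ball \<xi> (rad (n+2)))"
proof -
  define r0 where "r0 = rad (n+2)"
  have r0: "r0 > 0" "rad n = 4 * r0" unfolding r0_def using rad_4[of n] by auto
  have "r0 \<le> rad n" using r0 by simp
  also have "rad n \<le> rad m" using mn by (rule rad_mono)
  finally have r0m: "r0 \<le> 2 * rad m" using rad_pos[of m] by linarith
  have d: "dist c \<xi> \<le> 2 * rad m" using \<xi> unfolding J_def by auto
  have "measure M (ball c (rad m)) \<le> measure M (ball c (2 * rad m))"
    by (rule measure_ball_mono) (simp add: less_imp_le)
  also have "\<dots> \<le> C * (2 * (2 * rad m) / r0) powr Q * measure M (ball \<xi> r0)"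
    by (rule small_ball_lower[OF r0(1) r0m d])
  also have "2 * (2 * rad m) / r0 = 16 * (rad m / rad n)"
    using r0 by (simp add: field_simps)
  also have "rad m / rad n = 2 powr real_of_int (n - m)" by (rule rad_ratio)
  finally have "measure M (ball c (rad m)) \<le> C * (16 * 2 powr real_of_int (n - m)) powr Q * measure M (ball \<xi> r0)" .
  then show ?thesis unfolding lam_def r0_def using C
    by (simp add: divide_simps mult.commute mult.left_commute)
qed

lemma small_disj:
  assumes "\<xi> \<in> S n" "\<eta> \<in> S n" "z \<in> ball \<xi> (rad (n+2))" "z \<in> ball \<eta> (rad (n+2))"
  shows "\<xi> = \<eta>"
proof (rule ccontr)
  assume ne: "\<xi> \<noteq> \<eta>"
  have "2 * rad (n+2) = rad (n+1)" using rad_succ[of "n+1"] by (simp add: algebra_simps)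
  then have "dist \<xi> \<eta> < rad (n+1)" using assms(3,4) dist_triangle[of \<xi> \<eta> z]
    by (simp add: dist_commute)
  then show False using sep[OF assms(1,2) ne] by simp
qed

lemma term_bound:
  fixes v \<mu>b lam P :: real
  assumes v: "v \<ge> 0" and lam: "0 < lam" "lam \<le> \<mu>b" and P: "0 < P" "P < 1"
  shows "v * \<mu>b \<le> (v powr P * \<mu>b) powr (1/P) * lam powr (1 - 1/P)"
proof -
  have mb: "\<mu>b > 0" using lam by simp
  have e1: "(v powr P * \<mu>b) powr (1/P) = v * \<mu>b powr (1/P)"
    using v mb P by (simp add: powr_mult powr_powr powr_one)
  have e2: "\<mu>b = \<mu>b powr (1/P) * \<mu>b powr (1 - 1/P)"
    using mb by (simp add: powr_add[symmetric] powr_one)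
  have "1 - 1/P \<le> 0" using P by (simp add: field_simps)
  then have e3: "\<mu>b powr (1 - 1/P) \<le> lam powr (1 - 1/P)" using lam by (intro powr_mono2')
  have "v * \<mu>b = (v * \<mu>b powr (1/P)) * \<mu>b powr (1 - 1/P)" by (subst e2) (simp add: mult.assoc)
  also have "\<dots> \<le> (v * \<mu>b powr (1/P)) * lam powr (1 - 1/P)"
    using e3 v by (intro mult_left_mono) auto
  finally show ?thesis using e1 by simp
qed

end

context hf2
begin

lemma est_lt1:
  assumes v: "\<And>x. v x \<ge> 0" and mn: "m \<le> n" and p: "p \<noteq> \<infinity>"
    and P0: "enn2real p > 0" and P1: "enn2real p < 1"
  shows "(\<integral>\<^sup>+z\<in>ball c (rad m). ennreal (Gr v n z) \<partial>M)
    \<le> ennreal (C * 4 powr Q * lam c m n powr (1 - 1 / enn2real p)) * Lpn M p (level_fun S (\<lambda>x. ennreal (v x)) n)"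
proof -
  define P where "P = enn2real p"
  define lev where "lev = level_fun S (\<lambda>x. ennreal (v x)) n"
  define I where "I = (\<integral>\<^sup>+z. epow (lev z) P \<partial>M)"
  define lm where "lm = lam c m n"
  define K where "K = C * 4 powr Q * lm powr (1 - 1 / P)"
  define r0 where "r0 = rad (n+2)"
  have P0': "P > 0" and P1': "P < 1" using P0 P1 by (auto simp: P_def)
  have lm: "lm > 0" unfolding lm_def by (rule lam_pos)
  have K: "K > 0" unfolding K_def using lm C by simp
  have r0: "r0 > 0" "rad n = 4 * r0" unfolding r0_def using rad_4[of n] by auto
  have L: "Lpn M p lev = epow I (1/P)" using p by (simp add: Lpn_def P_def I_def)
  show ?thesis
  proof (cases "I = \<infinity>")
    case True
    then show ?thesis using K unfolding lev_def[symmetric] P_def[symmetric] lm_def[symmetric] K_def[symmetric] L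
      by (simp add: ennreal_mult_top)
  next
    case False
    then obtain Ir where Ir: "I = ennreal Ir" "Ir \<ge> 0" by (cases I) auto
    define cc where "cc \<xi> = v (n, \<xi>) powr P * measure M (ball \<xi> r0)" for \<xi>
    have cc: "cc \<xi> \<ge> 0" for \<xi> unfolding cc_def by simp
    have pw: "(\<Sum>\<xi>\<in>J c m n. ennreal (v (n, \<xi>) powr P) * indicator (ball \<xi> r0) z) \<le> epow (lev z) P" for z
    proof (cases "\<exists>\<xi>0\<in>J c m n. z \<in> ball \<xi>0 r0")
      case True
      then obtain \<xi>0 where \<xi>0: "\<xi>0 \<in> J c m n" "z \<in> ball \<xi>0 r0" by blast
      have \<xi>0S: "\<xi>0 \<in> S n" using \<xi>0 J_sub by auto
      have "(\<Sum>\<xi>\<in>J c m n. ennreal (v (n, \<xi>) powr P) * indicator (ball \<xi> r0) z)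
          = ennreal (v (n, \<xi>0) powr P) * indicator (ball \<xi>0 r0) z
            + (\<Sum>\<xi>\<in>J c m n - {\<xi>0}. ennreal (v (n, \<xi>) powr P) * indicator (ball \<xi> r0) z)"
        by (rule sum.remove[OF J_fin \<xi>0(1)])
      also have "(\<Sum>\<xi>\<in>J c m n - {\<xi>0}. ennreal (v (n, \<xi>) powr P) * indicator (ball \<xi> r0) z) = 0"
      proof (intro sum.neutral ballI)
        fix \<xi> assume \<xi>: "\<xi> \<in> J c m n - {\<xi>0}"
        have "z \<notin> ball \<xi> r0"
        proof
          assume "z \<in> ball \<xi> r0"
          then have "\<xi> = \<xi>0" using small_disj[of \<xi> n \<xi>0 z] \<xi> \<xi>0 \<xi>0S J_sub unfolding r0_def by auto
          then show False using \<xi> by simp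
        qed
        then show "ennreal (v (n, \<xi>) powr P) * indicator (ball \<xi> r0) z = 0" by simp
      qed
      also have "ennreal (v (n, \<xi>0) powr P) * indicator (ball \<xi>0 r0) z = epow (ennreal (v (n, \<xi>0))) P"
        using \<xi>0 v by (simp add: epow_ennreal)
      also have "\<dots> \<le> epow (lev z) P"
      proof (intro epow_mono)
        have "z \<in> Bx (n, \<xi>0)" using \<xi>0(2) r0 by auto
        then have "ennreal (v (n, \<xi>0)) = ennreal (v (n, \<xi>0)) * indicator (Bx (n, \<xi>0)) z" by simp
        also have "\<dots> \<le> lev z" unfolding lev_def level_fun_def
          by (rule ncs_ge1[where f="\<lambda>\<xi>. ennreal (v (n, \<xi>)) * indicator (Bx (n, \<xi>)) z"]) (rule \<xi>0S)
        finally show "ennreal (v (n, \<xi>0)) \<le> lev z" .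
      qed (use P0' in auto)
      finally show ?thesis by simp
    next
      case False
      then have "(\<Sum>\<xi>\<in>J c m n. ennreal (v (n, \<xi>) powr P) * indicator (ball \<xi> r0) z) = 0"
        by (intro sum.neutral) auto
      then show ?thesis by simp
    qed
    have "ennreal (\<Sum>\<xi>\<in>J c m n. cc \<xi>) = (\<Sum>\<xi>\<in>J c m n. ennreal (v (n, \<xi>) powr P) * emeasure M (ball \<xi> r0))"
      unfolding cc_def by (subst sum_ennreal[symmetric]) (auto intro!: sum.cong simp: emeasure_ball ennreal_mult)
    also have "\<dots> = (\<integral>\<^sup>+z. (\<Sum>\<xi>\<in>J c m n. ennreal (v (n, \<xi>) powr P) * indicator (ball \<xi> r0) z) \<partial>M)"
      by (subst nn_integral_sum) (auto simp: nn_integral_cmult_indicator)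
    also have "\<dots> \<le> I" unfolding I_def by (intro nn_integral_mono pw)
    finally have sumc: "(\<Sum>\<xi>\<in>J c m n. cc \<xi>) \<le> Ir" using Ir by (simp add: ennreal_le_iff2 sum_nonneg cc) (metis cc order.trans sum_nonneg)
    have "(\<Sum>\<xi>\<in>J c m n. v (n, \<xi>) * measure M (ball \<xi> (rad n)))
        \<le> (\<Sum>\<xi>\<in>J c m n. C * 4 powr Q * (cc \<xi> powr (1/P) * lm powr (1 - 1/P)))"
    proof (intro sum_mono)
      fix \<xi> assume \<xi>: "\<xi> \<in> J c m n"
      have d: "measure M (ball \<xi> (rad n)) \<le> C * 4 powr Q * measure M (ball \<xi> r0)"
        using doubling[OF r0(1), of 4 \<xi>] r0 by simp
      have lb: "lm \<le> measure M (ball \<xi> r0)" unfolding lm_def r0_def using lam_le[OF mn \<xi>] .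
      have "v (n, \<xi>) * measure M (ball \<xi> (rad n)) \<le> v (n, \<xi>) * (C * 4 powr Q * measure M (ball \<xi> r0))"
        using d v by (intro mult_left_mono) auto
      also have "\<dots> = C * 4 powr Q * (v (n, \<xi>) * measure M (ball \<xi> r0))" by simp
      also have "\<dots> \<le> C * 4 powr Q * (cc \<xi> powr (1/P) * lm powr (1 - 1/P))"
        unfolding cc_def using C v lm lb P0' P1'
        by (intro mult_left_mono term_bound) auto
      finally show "v (n, \<xi>) * measure M (ball \<xi> (rad n)) \<le> C * 4 powr Q * (cc \<xi> powr (1/P) * lm powr (1 - 1/P))" .
    qed
    also have "\<dots> = C * 4 powr Q * lm powr (1 - 1/P) * (\<Sum>\<xi>\<in>J c m n. cc \<xi> powr (1/P))"
      by (simp add: sum_distrib_left mult_ac)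
    also have "(\<Sum>\<xi>\<in>J c m n. cc \<xi> powr (1/P)) \<le> (\<Sum>\<xi>\<in>J c m n. cc \<xi>) powr (1/P)"
      using P0' P1' cc by (intro sum_powr_le) auto
    also have "\<dots> \<le> Ir powr (1/P)"
      using sumc P0' cc by (intro powr_mono2) (auto simp: sum_nonneg)
    finally have real_bd: "(\<Sum>\<xi>\<in>J c m n. v (n, \<xi>) * measure M (ball \<xi> (rad n))) \<le> K * Ir powr (1/P)"
      unfolding K_def using C lm by (simp add: mult_left_mono)
    have "(\<integral>\<^sup>+z\<in>ball c (rad m). ennreal (Gr v n z) \<partial>M) \<le> ennreal (\<Sum>\<xi>\<in>J c m n. v (n, \<xi>) * measure M (ball \<xi> (rad n)))"
      by (rule set_int_Gr_le[where v=v, OF v mn])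
    also have "\<dots> \<le> ennreal (K * Ir powr (1/P))" by (rule ennreal_leI[OF real_bd])
    also have "\<dots> = ennreal K * epow I (1/P)"
      using Ir K by (simp add: epow_ennreal ennreal_mult)
    finally show ?thesis using L unfolding K_def lm_def P_def lev_def by simp
  qed
qed

end

context hf2
begin

lemma lam_powr: 
  assumes P0: "P > 0"
  shows "lam c m n powr (1 - 1/P) =
    ((measure M (ball c (rad m)) / (C * 16 powr Q)) powr (1 - 1/P) * 2 powr (- real_of_int m * (Q * (1/P - 1))))
     * 2 powr (real_of_int n * (Q * (1/P - 1)))"
proof -
  define a where "a = measure M (ball c (rad m)) / (C * 16 powr Q)"
  define e where "e = 1 - 1/P"
  have "(16 * 2 powr real_of_int (n - m)) powr Q = 16 powr Q * 2 powr (real_of_int (n - m) * Q)"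
    by (simp add: powr_mult powr_powr)
  then have eq: "lam c m n = a * 2 powr (- (real_of_int (n - m) * Q))"
    unfolding lam_def a_def by (simp add: powr_minus divide_simps)
  have "lam c m n powr e = a powr e * 2 powr (- (real_of_int (n - m) * Q) * e)"
    unfolding eq by (simp only: powr_mult powr_powr)
  also have "- (real_of_int (n - m) * Q) * e = - real_of_int m * (Q * (1/P - 1)) + real_of_int n * (Q * (1/P - 1))"
    unfolding e_def by (simp add: algebra_simps)
  finally show ?thesis unfolding a_def e_def by (simp only: powr_add mult.assoc)
qed

lemma est_all:
  assumes s: "s > 0" and p: "ennreal (Q / (Q + s)) < p"
  shows "\<exists>\<kappa> < s. \<forall>c m. \<exists>K \<ge> 0. \<forall>v n. (\<forall>x. v x \<ge> 0) \<longrightarrow> m \<le> n \<longrightarrow>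
     (\<integral>\<^sup>+z\<in>ball c (rad m). ennreal (Gr v n z) \<partial>M)
       \<le> ennreal (K * 2 powr (\<kappa> * real_of_int n)) * Lpn M p (level_fun S (\<lambda>x. ennreal (v x)) n)"
proof (cases "p = \<infinity>")
  case True
  have "\<forall>c m. \<exists>K \<ge> 0. \<forall>v n. (\<forall>x. v x \<ge> 0) \<longrightarrow> m \<le> n \<longrightarrow>
     (\<integral>\<^sup>+z\<in>ball c (rad m). ennreal (Gr v n z) \<partial>M)
       \<le> ennreal (K * 2 powr (0 * real_of_int n)) * Lpn M p (level_fun S (\<lambda>x. ennreal (v x)) n)"
  proof (intro allI)
    fix c m
    show "\<exists>K \<ge> 0. \<forall>v n. (\<forall>x. v x \<ge> 0) \<longrightarrow> m \<le> n \<longrightarrow>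
     (\<integral>\<^sup>+z\<in>ball c (rad m). ennreal (Gr v n z) \<partial>M)
       \<le> ennreal (K * 2 powr (0 * real_of_int n)) * Lpn M p (level_fun S (\<lambda>x. ennreal (v x)) n)"
      using est_inf[OF _ True] by (intro exI[of _ "measure M (ball c (rad m))"]) auto
  qed
  then show ?thesis using s by blast
next
  case False
  define P where "P = enn2real p"
  have QQ: "0 < Q / (Q + s)" using Q s by simp
  have pP: "p = ennreal P" using False unfolding P_def by (cases p) auto
  have PQ: "Q / (Q + s) < P" using p QQ unfolding pP by (simp add: ennreal_less_iff)
  have P0: "P > 0" using PQ QQ by simp
  show ?thesis
  proof (cases "P \<ge> 1")
    case True
    have "\<forall>c m. \<exists>K \<ge> 0. \<forall>v n. (\<forall>x. v x \<ge> 0) \<longrightarrow> m \<le> n \<longrightarrow>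
       (\<integral>\<^sup>+z\<in>ball c (rad m). ennreal (Gr v n z) \<partial>M)
         \<le> ennreal (K * 2 powr (0 * real_of_int n)) * Lpn M p (level_fun S (\<lambda>x. ennreal (v x)) n)"
    proof (intro allI)
      fix c m
      show "\<exists>K \<ge> 0. \<forall>v n. (\<forall>x. v x \<ge> 0) \<longrightarrow> m \<le> n \<longrightarrow>
       (\<integral>\<^sup>+z\<in>ball c (rad m). ennreal (Gr v n z) \<partial>M)
         \<le> ennreal (K * 2 powr (0 * real_of_int n)) * Lpn M p (level_fun S (\<lambda>x. ennreal (v x)) n)"
        using est_ge1[OF _ _ False] True unfolding P_def
        by (intro exI[of _ "2 * measure M (ball c (rad m)) powr (1 - 1 / enn2real p)"]) auto
    qed
    then show ?thesis using s by blast
  next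
    case False
    then have P1: "P < 1" by simp
    define \<kappa> where "\<kappa> = Q * (1/P - 1)"
    have "Q < P * (Q + s)" using PQ Q s by (simp add: field_simps)
    then have "Q / P < Q + s" using P0 by (simp add: field_simps)
    then have \<kappa>s: "\<kappa> < s" unfolding \<kappa>_def using P0 by (simp add: field_simps)
    have "\<forall>c m. \<exists>K \<ge> 0. \<forall>v n. (\<forall>x. v x \<ge> 0) \<longrightarrow> m \<le> n \<longrightarrow>
       (\<integral>\<^sup>+z\<in>ball c (rad m). ennreal (Gr v n z) \<partial>M)
         \<le> ennreal (K * 2 powr (\<kappa> * real_of_int n)) * Lpn M p (level_fun S (\<lambda>x. ennreal (v x)) n)"
    proof (intro allI)
      fix c m
      define K0 where "K0 = (measure M (ball c (rad m)) / (C * 16 powr Q)) powr (1 - 1/P) * 2 powr (- real_of_int m * \<kappa>)"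
      show "\<exists>K \<ge> 0. \<forall>v n. (\<forall>x. v x \<ge> 0) \<longrightarrow> m \<le> n \<longrightarrow>
       (\<integral>\<^sup>+z\<in>ball c (rad m). ennreal (Gr v n z) \<partial>M)
         \<le> ennreal (K * 2 powr (\<kappa> * real_of_int n)) * Lpn M p (level_fun S (\<lambda>x. ennreal (v x)) n)"
      proof (intro exI[of _ "C * 4 powr Q * K0"] conjI allI impI)
        show "0 \<le> C * 4 powr Q * K0" unfolding K0_def using C by simp
        fix v :: "int \<times> 'a \<Rightarrow> real" and n assume v: "\<forall>x. v x \<ge> 0" and mn: "m \<le> n"
        have "lam c m n powr (1 - 1/P) = K0 * 2 powr (\<kappa> * real_of_int n)"
          unfolding K0_def \<kappa>_def using lam_powr[OF P0, of c m n] by (simp add: mult.commute)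
        then show "(\<integral>\<^sup>+z\<in>ball c (rad m). ennreal (Gr v n z) \<partial>M)
         \<le> ennreal (C * 4 powr Q * K0 * 2 powr (\<kappa> * real_of_int n)) * Lpn M p (level_fun S (\<lambda>x. ennreal (v x)) n)"
          using est_lt1[of v m n p c] v mn \<open>p \<noteq> \<infinity>\<close> P0 P1 unfolding P_def by (simp add: mult.assoc)
      qed
    qed
    then show ?thesis using \<kappa>s by blast
  qed
qed

lemma est_Inorm:
  assumes q: "0 < q"
    and E: "\<And>v n. (\<forall>x. v x \<ge> 0) \<Longrightarrow> m \<le> n \<Longrightarrow>
     (\<integral>\<^sup>+z\<in>ball c (rad m). ennreal (Gr v n z) \<partial>M)
       \<le> ennreal (K * 2 powr (\<kappa> * real_of_int n)) * Lpn M p (level_fun S (\<lambda>x. ennreal (v x)) n)"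
    and K: "K \<ge> 0" and v: "\<forall>x. v x \<ge> 0" and mn: "m \<le> n"
  shows "(\<integral>\<^sup>+z\<in>ball c (rad m). ennreal (Gr v n z) \<partial>M)
       \<le> ennreal (K * 2 powr ((\<kappa> - s) * real_of_int n)) * Inorm M S s p q (\<lambda>x. ennreal (v x))"
proof -
  have "ennreal (K * 2 powr (\<kappa> * real_of_int n)) = ennreal (K * 2 powr ((\<kappa> - s) * real_of_int n)) * ennreal (2 powr (real_of_int n * s))"
    using K by (simp add: ennreal_mult[symmetric] powr_add[symmetric] algebra_simps)
  then have "ennreal (K * 2 powr (\<kappa> * real_of_int n)) * Lpn M p (level_fun S (\<lambda>x. ennreal (v x)) n)
     = ennreal (K * 2 powr ((\<kappa> - s) * real_of_int n)) * (ennreal (2 powr (real_of_int n * s)) * Lpn M p (level_fun S (\<lambda>x. ennreal (v x)) n))"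
    by (simp add: mult.assoc)
  also have "\<dots> \<le> ennreal (K * 2 powr ((\<kappa> - s) * real_of_int n)) * Inorm M S s p q (\<lambda>x. ennreal (v x))"
    by (intro mult_left_mono Inorm_ge q) auto
  finally show ?thesis using E[OF v mn] by (rule order.trans[rotated])
qed

end

lemma telescope_bound:
  fixes T :: "int \<Rightarrow> complex" and G :: "int \<Rightarrow> real"
  assumes D: "\<And>k. cmod (T (k+1) - T k) \<le> G k"
  shows "ennreal (cmod (T (k + int j) - T k)) \<le> (\<Sum>i<j. ennreal (G (k + int i)))"
proof (induction j)
  case 0 then show ?case by simp
next
  case (Suc j)
  have e: "k + int (Suc j) = (k + int j) + 1" by simp
  have "cmod (T (k + int (Suc j)) - T k) \<le> cmod (T (k + int j + 1) - T (k + int j)) + cmod (T (k + int j) - T k)"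
    using norm_triangle_ineq[of "T (k + int j + 1) - T (k + int j)" "T (k + int j) - T k"]
    unfolding e by simp
  also have "\<dots> \<le> G (k + int j) + cmod (T (k + int j) - T k)" using D by simp
  finally have "ennreal (cmod (T (k + int (Suc j)) - T k)) \<le> ennreal (G (k + int j)) + ennreal (cmod (T (k + int j) - T k))"
    by (metis ennreal_leI ennreal_plus norm_ge_zero order.trans D)
  also have "\<dots> \<le> ennreal (G (k + int j)) + (\<Sum>i<j. ennreal (G (k + int i)))"
    using Suc by (intro add_left_mono)
  finally show ?case by (simp add: add.commute)
qed

lemma tail_conv:
  fixes T :: "int \<Rightarrow> complex" and G :: "int \<Rightarrow> real"
  assumes D: "\<And>k. cmod (T (k+1) - T k) \<le> G k" and G0: "\<And>k. G k \<ge> 0"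
    and fin: "(\<Sum>i. ennreal (G (k0 + int i))) \<noteq> \<infinity>"
  shows "\<exists>L. (T \<longlongrightarrow> L) at_top \<and> (\<forall>k \<ge> k0. ennreal (cmod (T k - L)) \<le> (\<Sum>i. ennreal (G (k + int i))))"
proof -
  define a where "a i = T (k0 + int i)" for i
  define g where "g i = G (k0 + int i)" for i
  have gs: "summable g" unfolding g_def using fin G0 by (intro summable_suminf_not_top) auto
  have "summable (\<lambda>i. a (Suc i) - a i)"
  proof (rule summable_comparison_test[OF _ gs])
    show "\<exists>N. \<forall>n\<ge>N. norm (a (Suc n) - a n) \<le> g n"
    proof (intro exI[of _ 0] allI impI)
      fix n :: nat
      have "a (Suc n) = T ((k0 + int n) + 1)" unfolding a_def by (simp add: algebra_simps)
      then show "norm (a (Suc n) - a n) \<le> g n" using D[of "k0 + int n"] unfolding a_def g_def by simp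
    qed
  qed
  then have "(\<lambda>j. \<Sum>i<j. a (Suc i) - a i) \<longlonglongrightarrow> (\<Sum>i. a (Suc i) - a i)"
    by (rule summable_LIMSEQ)
  then have "(\<lambda>j. a j - a 0) \<longlonglongrightarrow> (\<Sum>i. a (Suc i) - a i)"
    by (simp add: sum_lessThan_telescope)
  then have "(\<lambda>j. (a j - a 0) + a 0) \<longlonglongrightarrow> (\<Sum>i. a (Suc i) - a i) + a 0"
    by (intro tendsto_add) auto
  then obtain L where aL: "a \<longlonglongrightarrow> L" by auto
  have TL: "(T \<longlongrightarrow> L) at_top"
  proof -
    have "((\<lambda>k. a (nat (k - k0))) \<longlongrightarrow> L) at_top"
    proof (rule filterlim_compose[OF aL])
      show "filterlim (\<lambda>k. nat (k - k0)) sequentially at_top"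
        unfolding filterlim_at_top
      proof
        fix N :: nat
        show "eventually (\<lambda>k. N \<le> nat (k - k0)) at_top"
          using eventually_ge_at_top[of "k0 + int N"] by eventually_elim linarith
      qed
    qed
    moreover have "eventually (\<lambda>k. a (nat (k - k0)) = T k) at_top"
      using eventually_ge_at_top[of k0] by eventually_elim (simp add: a_def)
    ultimately show ?thesis by (rule tendsto_cong[THEN iffD1, rotated])
  qed
  have "ennreal (cmod (T k - L)) \<le> (\<Sum>i. ennreal (G (k + int i)))" if k: "k \<ge> k0" for k
  proof -
    have lim: "(\<lambda>j. ennreal (cmod (T (k + int j) - T k))) \<longlonglongrightarrow> ennreal (cmod (L - T k))"
    proof (intro tendsto_ennrealI tendsto_norm tendsto_diff tendsto_const)
      show "(\<lambda>j. T (k + int j)) \<longlonglongrightarrow> L"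
      proof (rule filterlim_compose[OF TL])
        show "filterlim (\<lambda>j. k + int j) at_top sequentially"
          unfolding filterlim_at_top
        proof
          fix C :: int
          show "eventually (\<lambda>j. C \<le> k + int j) sequentially"
            using eventually_ge_at_top[of "nat (C - k)"] by eventually_elim linarith
        qed
      qed
    qed
    have "ennreal (cmod (L - T k)) \<le> (\<Sum>i. ennreal (G (k + int i)))"
    proof (rule LIMSEQ_le_const2[OF lim], intro exI allI impI)
      fix j :: nat
      have "ennreal (cmod (T (k + int j) - T k)) \<le> (\<Sum>i<j. ennreal (G (k + int i)))"
        by (rule telescope_bound[where T=T and G=G, OF D])
      also have "\<dots> \<le> (\<Sum>i. ennreal (G (k + int i)))" by (intro sum_le_suminf) auto
      finally show "ennreal (cmod (T (k + int j) - T k)) \<le> (\<Sum>i. ennreal (G (k + int i)))" .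
    qed
    then show ?thesis by (simp add: norm_minus_commute)
  qed
  then show ?thesis using TL by blast
qed

lemma geom_ennreal:
  fixes e a :: real
  assumes e: "e > 0" and a: "a \<ge> 0"
  shows "(\<Sum>i. ennreal (a * 2 powr (- e * real_of_int (n + int i))))
       = ennreal (a * 2 powr (- e * real_of_int n) / (1 - 2 powr (- e)))"
proof -
  define r where "r = 2 powr (- e)"
  have "2 powr (- e) < 2 powr 0" using e by (intro powr_less_mono) auto
  then have r: "0 < r" "r < 1" unfolding r_def by auto
  have ri: "r ^ i = 2 powr (- e * real i)" for i
    unfolding r_def by (simp add: powr_realpow[symmetric] powr_powr)
  have eq: "a * 2 powr (- e * real_of_int (n + int i)) = (a * 2 powr (- e * real_of_int n)) * r ^ i" for i
    unfolding ri by (simp add: powr_add[symmetric] algebra_simps)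
  have "(\<lambda>i. r ^ i) sums (1 / (1 - r))" using r by (intro geometric_sums) auto
  then have "(\<lambda>i. (a * 2 powr (- e * real_of_int n)) * r ^ i) sums ((a * 2 powr (- e * real_of_int n)) * (1 / (1 - r)))"
    by (rule sums_mult)
  then show ?thesis unfolding eq r_def
    by (subst suminf_ennreal_eq) (auto simp: r_def intro!: mult_nonneg_nonneg a)
qed


locale conv = hf2 M C Q S \<psi> C''
  for M :: "'a::metric_space measure" and C Q :: real and S :: "int \<Rightarrow> 'a set" and \<psi> C'' +
  fixes u :: "int \<times> 'a \<Rightarrow> complex" and e :: real and K :: "'a \<Rightarrow> int \<Rightarrow> real" and N :: ennreal
  assumes e: "e > 0" and K: "\<And>c m. K c m \<ge> 0" and N: "N \<noteq> \<infinity>"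
    and E: "\<And>c m n. m \<le> n \<Longrightarrow> (\<integral>\<^sup>+z\<in>ball c (rad m). ennreal (Gr (ddu S u) n z) \<partial>M)
              \<le> ennreal (K c m * 2 powr (- e * real_of_int n)) * N"
begin

abbreviation "v \<equiv> ddu S u"
abbreviation "T k \<equiv> Tn S \<psi> k u"

lemma v_nonneg: "\<forall>x. v x \<ge> 0" by (simp add: ddu_nonneg)

lemma Dif: "cmod (T (k+1) z - T k z) \<le> Gr v k z"
  unfolding Gr_def by (rule Tdiff)

lemma Gr0: "Gr v k z \<ge> 0" using Gr_nonneg[of v] v_nonneg by auto

definition geo :: "'a \<Rightarrow> int \<Rightarrow> int \<Rightarrow> real" where
  "geo c m n = K c m * 2 powr (- e * real_of_int n) / (1 - 2 powr (- e))"

lemma r_lt1: "2 powr (- e) < 1"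
proof -
  have "2 powr (- e) < 2 powr 0" using e by (intro powr_less_mono) auto
  then show ?thesis by simp
qed

lemma geo_nonneg: "geo c m n \<ge> 0" unfolding geo_def using K r_lt1 by simp

lemma sum_int_bound:
  assumes mn: "m \<le> n"
  shows "(\<integral>\<^sup>+z. (\<Sum>i. ennreal (GJ v c m (n + int i) z) * indicator (ball c (rad m)) z) \<partial>M)
     \<le> ennreal (geo c m n) * N"
proof -
  have "(\<integral>\<^sup>+z. (\<Sum>i. ennreal (GJ v c m (n + int i) z) * indicator (ball c (rad m)) z) \<partial>M)
      = (\<Sum>i. \<integral>\<^sup>+z\<in>ball c (rad m). ennreal (GJ v c m (n + int i) z) \<partial>M)"
    by (rule nn_integral_suminf) measurable
  also have "\<dots> = (\<Sum>i. \<integral>\<^sup>+z\<in>ball c (rad m). ennreal (Gr v (n + int i) z) \<partial>M)"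
    using mn by (subst set_int_Gr[where v=v]) (auto simp: ddu_nonneg)
  also have "\<dots> \<le> (\<Sum>i. ennreal (K c m * 2 powr (- e * real_of_int (n + int i))) * N)"
    using mn by (intro suminf_le E) auto
  also have "\<dots> = (\<Sum>i. ennreal (K c m * 2 powr (- e * real_of_int (n + int i)))) * N"
    by simp
  also have "\<dots> = ennreal (geo c m n) * N"
    unfolding geo_def using geom_ennreal[OF e K[of c m], of n] by simp
  finally show ?thesis .
qed

lemma AE_fin: "AE z in M. z \<in> ball c (rad m) \<longrightarrow> (\<Sum>i. ennreal (Gr v (m + int i) z)) \<noteq> \<infinity>"
proof -
  define F where "F z = (\<Sum>i. ennreal (GJ v c m (m + int i) z) * indicator (ball c (rad m)) z)" for z
  have Fm: "F \<in> borel_measurable M" unfolding F_def by measurable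
  have "integral\<^sup>N M F \<le> ennreal (geo c m m) * N" unfolding F_def by (rule sum_int_bound) simp
  also have "\<dots> < \<infinity>" using N by (simp add: ennreal_mult_less_top less_top)
  finally have "AE z in M. F z \<noteq> \<infinity>" using Fm by (intro nn_integral_PInf_AE) auto
  then show ?thesis
  proof eventually_elim
    case (elim z)
    show ?case
    proof
      assume z: "z \<in> ball c (rad m)"
      have "F z = (\<Sum>i. ennreal (Gr v (m + int i) z))"
        unfolding F_def using z by (intro suminf_cong) (simp add: GJ_eq_Gr)
      then show "(\<Sum>i. ennreal (Gr v (m + int i) z)) \<noteq> \<infinity>" using elim by simp
    qed
  qed
qed

definition Tr :: "'a \<Rightarrow> complex" where
  "Tr z = lim (\<lambda>i::nat. T (int i) z)"

lemma Tr_meas[measurable]: "Tr \<in> borel_measurable M"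
  unfolding Tr_def by measurable

lemma conv_at:
  assumes fin: "(\<Sum>i. ennreal (Gr v (k0 + int i) z)) \<noteq> \<infinity>"
  shows "((\<lambda>k. T k z) \<longlongrightarrow> Tr z) at_top"
    and "\<And>k. k \<ge> k0 \<Longrightarrow> ennreal (cmod (T k z - Tr z)) \<le> (\<Sum>i. ennreal (Gr v (k + int i) z))"
proof -
  obtain L where L: "((\<lambda>k. T k z) \<longlongrightarrow> L) at_top"
    and B: "\<forall>k \<ge> k0. ennreal (cmod (T k z - L)) \<le> (\<Sum>i. ennreal (Gr v (k + int i) z))"
    using tail_conv[where T="\<lambda>k. T k z" and G="\<lambda>k. Gr v k z", OF Dif Gr0 fin] by blast
  have "(\<lambda>i::nat. T (int i) z) \<longlonglongrightarrow> L"
    by (rule filterlim_compose[OF L filterlim_int_sequentially])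
  then have "Tr z = L" unfolding Tr_def by (rule limI)
  then show "((\<lambda>k. T k z) \<longlongrightarrow> Tr z) at_top"
    and "\<And>k. k \<ge> k0 \<Longrightarrow> ennreal (cmod (T k z - Tr z)) \<le> (\<Sum>i. ennreal (Gr v (k + int i) z))"
    using L B by auto
qed

lemma AE_conv: "AE z in M. ((\<lambda>k. T k z) \<longlongrightarrow> Tr z) at_top"
proof -
  obtain c0 :: 'a where True by simp
  have "AE z in M. \<forall>j::nat. z \<in> ball c0 (rad (- int j)) \<longrightarrow> (\<Sum>i. ennreal (Gr v (- int j + int i) z)) \<noteq> \<infinity>"
    unfolding AE_all_countable by (intro allI AE_fin)
  then show ?thesis
  proof eventually_elim
    case (elim z)
    obtain j where j: "dist c0 z < 2 ^ j" using real_arch_pow[of 2 "dist c0 z"] by auto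
    have "rad (- int j) = 2 ^ j" by (simp add: rad_def powr_realpow)
    then have "z \<in> ball c0 (rad (- int j))" using j by simp
    then show ?case using elim conv_at(1) by blast
  qed
qed

lemma AE_bound: "AE z in M. z \<in> ball c (rad m) \<longrightarrow>
   (\<forall>k \<ge> m. ennreal (cmod (T k z - Tr z)) \<le> (\<Sum>i. ennreal (GJ v c m (k + int i) z)))"
  using AE_fin[of c m]
proof eventually_elim
  case (elim z)
  show ?case
  proof (intro impI allI)
    fix k assume z: "z \<in> ball c (rad m)" and k: "k \<ge> m"
    have "ennreal (cmod (T k z - Tr z)) \<le> (\<Sum>i. ennreal (Gr v (k + int i) z))"
      using conv_at(2)[of m z k] elim z k by blast
    also have "\<dots> = (\<Sum>i. ennreal (GJ v c m (k + int i) z))"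
      using z k by (intro suminf_cong) (simp add: GJ_eq_Gr)
    finally show "ennreal (cmod (T k z - Tr z)) \<le> (\<Sum>i. ennreal (GJ v c m (k + int i) z))" .
  qed
qed

lemma L1_ball: "m \<le> n \<Longrightarrow>
  (\<integral>\<^sup>+z\<in>ball c (rad m). ennreal (cmod (T n z - Tr z)) \<partial>M) \<le> ennreal (geo c m n) * N"
proof -
  assume mn: "m \<le> n"
  have "(\<integral>\<^sup>+z\<in>ball c (rad m). ennreal (cmod (T n z - Tr z)) \<partial>M)
      \<le> (\<integral>\<^sup>+z. (\<Sum>i. ennreal (GJ v c m (n + int i) z) * indicator (ball c (rad m)) z) \<partial>M)"
  proof (rule nn_integral_mono_AE)
    show "AE z in M. ennreal (cmod (T n z - Tr z)) * indicator (ball c (rad m)) z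
        \<le> (\<Sum>i. ennreal (GJ v c m (n + int i) z) * indicator (ball c (rad m)) z)"
      using AE_bound[of c m]
    proof eventually_elim
      case (elim z)
      show ?case using elim mn by (cases "z \<in> ball c (rad m)") auto
    qed
  qed
  also have "\<dots> \<le> ennreal (geo c m n) * N" by (rule sum_int_bound[OF mn])
  finally show ?thesis .
qed

end

context conv
begin

lemma exists_m: "\<exists>m. r \<le> rad m"
proof -
  obtain j where j: "r < 2 ^ j" using real_arch_pow[of 2 r] by auto
  have "rad (- int j) = 2 ^ j" by (simp add: rad_def powr_realpow)
  then show ?thesis using j by (intro exI[of _ "- int j"]) simp
qed

lemma pow_lim: "((\<lambda>n::int. 2 powr (- e * real_of_int n)) \<longlongrightarrow> 0) at_top"
proof -
  define r where "r = 2 powr (- e)"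
  have r: "norm r < 1" unfolding r_def using r_lt1 by simp
  have "((\<lambda>n::int. r ^ nat n) \<longlongrightarrow> 0) at_top"
    by (rule filterlim_compose[OF LIMSEQ_power_zero[OF r] filterlim_nat_sequentially])
  moreover have "eventually (\<lambda>n::int. r ^ nat n = 2 powr (- e * real_of_int n)) at_top"
    using eventually_ge_at_top[of "0::int"]
  proof eventually_elim
    case (elim n)
    have "r ^ nat n = 2 powr (- e * real (nat n))" unfolding r_def by (simp add: powr_realpow[symmetric] powr_powr)
    then show ?case using elim by simp
  qed
  ultimately show ?thesis by (rule tendsto_cong[THEN iffD1, rotated])
qed

lemma L1_conv: "((\<lambda>n. \<integral>\<^sup>+ z \<in> ball \<xi> r. ennreal (cmod (T n z - Tr z)) \<partial>M) \<longlongrightarrow> 0) at_top"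
proof -
  obtain m where m: "r \<le> rad m" using exists_m by blast
  obtain NR where NR: "N = ennreal NR" "NR \<ge> 0" using N by (cases N) auto
  define g where "g n = ennreal (geo \<xi> m n * NR)" for n
  have "((\<lambda>n. geo \<xi> m n * NR) \<longlongrightarrow> K \<xi> m * 0 / (1 - 2 powr (- e)) * NR) at_top"
    unfolding geo_def by (intro tendsto_intros pow_lim) (use r_lt1 in auto)
  then have g0: "(g \<longlongrightarrow> 0) at_top" unfolding g_def by (intro tendsto_ennrealI[of _ 0, simplified]) simp
  show ?thesis
  proof (rule tendsto_sandwich[OF _ _ tendsto_const g0])
    show "eventually (\<lambda>n. 0 \<le> (\<integral>\<^sup>+ z \<in> ball \<xi> r. ennreal (cmod (T n z - Tr z)) \<partial>M)) at_top" by simp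
    show "eventually (\<lambda>n. (\<integral>\<^sup>+ z \<in> ball \<xi> r. ennreal (cmod (T n z - Tr z)) \<partial>M) \<le> g n) at_top"
      using eventually_ge_at_top[of m]
    proof eventually_elim
      case (elim n)
      have "(\<integral>\<^sup>+ z \<in> ball \<xi> r. ennreal (cmod (T n z - Tr z)) \<partial>M) \<le> (\<integral>\<^sup>+ z \<in> ball \<xi> (rad m). ennreal (cmod (T n z - Tr z)) \<partial>M)"
        using m by (intro nn_integral_mono) (auto simp: indicator_def)
      also have "\<dots> \<le> ennreal (geo \<xi> m n) * N" by (rule L1_ball[OF elim])
      also have "\<dots> = g n" unfolding g_def NR(1) using geo_nonneg NR(2) by (simp add: ennreal_mult)
      finally show ?case .
    qed
  qed
qed

lemma Tr_int: "set_integrable M (ball \<xi> r) Tr"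
proof -
  obtain m where m: "r \<le> rad m" using exists_m by blast
  define Cm where "Cm = (\<Sum>\<eta>\<in>J \<xi> m m. cmod (u (m, \<eta>)))"
  have Tb: "cmod (T m z) \<le> Cm" if z: "z \<in> ball \<xi> (rad m)" for z
  proof -
    have "cmod (T m z) \<le> (\<Sum>\<eta>\<in>A m z. cmod (u (m, \<eta>)))" by (rule Tn_bound)
    also have "\<dots> \<le> Cm" unfolding Cm_def using A_sub_J[of m m z \<xi>] z by (intro sum_mono2) auto
    finally show ?thesis .
  qed
  have "(\<integral>\<^sup>+z. ennreal (norm (indicator (ball \<xi> r) z *\<^sub>R Tr z)) \<partial>M)
      \<le> (\<integral>\<^sup>+z. ennreal Cm * indicator (ball \<xi> (rad m)) z + ennreal (cmod (T m z - Tr z)) * indicator (ball \<xi> (rad m)) z \<partial>M)"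
  proof (intro nn_integral_mono)
    fix z
    show "ennreal (norm (indicator (ball \<xi> r) z *\<^sub>R Tr z))
      \<le> ennreal Cm * indicator (ball \<xi> (rad m)) z + ennreal (cmod (T m z - Tr z)) * indicator (ball \<xi> (rad m)) z"
    proof (cases "z \<in> ball \<xi> r")
      case True
      then have zm: "z \<in> ball \<xi> (rad m)" using m by auto
      have "cmod (Tr z) \<le> cmod (T m z) + cmod (T m z - Tr z)"
        using norm_triangle_ineq4[of "T m z" "T m z - Tr z"] by simp
      also have "\<dots> \<le> Cm + cmod (T m z - Tr z)" using Tb[OF zm] by simp
      finally have "ennreal (cmod (Tr z)) \<le> ennreal (Cm + cmod (T m z - Tr z))" by (rule ennreal_leI)
      also have "\<dots> = ennreal Cm + ennreal (cmod (T m z - Tr z))"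
        using Tb[OF zm] by (intro ennreal_plus) (auto intro: order_trans[OF norm_ge_zero])
      finally show ?thesis using True zm by simp
    qed simp
  qed
  also have "\<dots> = ennreal Cm * emeasure M (ball \<xi> (rad m)) + (\<integral>\<^sup>+z\<in>ball \<xi> (rad m). ennreal (cmod (T m z - Tr z)) \<partial>M)"
    by (subst nn_integral_add) (auto simp: nn_integral_cmult_indicator)
  also have "\<dots> \<le> ennreal Cm * ennreal (measure M (ball \<xi> (rad m))) + ennreal (geo \<xi> m m) * N"
    by (intro add_mono L1_ball) (auto simp: emeasure_ball)
  also have "\<dots> < \<infinity>" using N by (simp add: ennreal_mult_eq_top_iff less_top[symmetric])
  finally show ?thesis unfolding set_integrable_def by (intro integrableI_bounded) auto
qed

lemma final_bound:
  assumes \<xi>0: "\<xi>0 \<in> S n"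
  shows "(\<integral>\<^sup>+z\<in>Bx (n, \<xi>0). ennreal (cmod (Tr z - u (n, \<xi>0))) \<partial>M)
      \<le> ennreal (K \<xi>0 n * 2 powr (- e * real_of_int n) * (1 + 1 / (1 - 2 powr (- e)))) * N"
proof -
  define B where "B = ball \<xi>0 (rad n)"
  have "(\<integral>\<^sup>+z\<in>Bx (n, \<xi>0). ennreal (cmod (Tr z - u (n, \<xi>0))) \<partial>M)
      \<le> (\<integral>\<^sup>+z. ennreal (GJ v \<xi>0 n n z) * indicator B z + ennreal (cmod (T n z - Tr z)) * indicator B z \<partial>M)"
  proof (intro nn_integral_mono)
    fix z
    show "ennreal (cmod (Tr z - u (n, \<xi>0))) * indicator (Bx (n, \<xi>0)) z
      \<le> ennreal (GJ v \<xi>0 n n z) * indicator B z + ennreal (cmod (T n z - Tr z)) * indicator B z"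
    proof (cases "z \<in> B")
      case True
      then have zB: "z \<in> Bx (n, \<xi>0)" unfolding B_def by simp
      have "v (n, \<xi>0) \<le> Gr v n z" unfolding Gr_def
        using \<xi>0 zB by (intro member_le_sum) (auto simp: A_iff ddu_nonneg)
      also have "\<dots> = GJ v \<xi>0 n n z" using True unfolding B_def by (simp add: GJ_eq_Gr)
      finally have vx: "v (n, \<xi>0) \<le> GJ v \<xi>0 n n z" .
      have "cmod (Tr z - u (n, \<xi>0)) \<le> cmod (T n z - u (n, \<xi>0)) + cmod (T n z - Tr z)"
        using norm_triangle_ineq4[of "T n z - u (n, \<xi>0)" "T n z - Tr z"] by simp
      also have "\<dots> \<le> GJ v \<xi>0 n n z + cmod (T n z - Tr z)"
        using Tzero[OF \<xi>0 zB, of u] vx by simp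
      finally have "ennreal (cmod (Tr z - u (n, \<xi>0))) \<le> ennreal (GJ v \<xi>0 n n z + cmod (T n z - Tr z))"
        by (rule ennreal_leI)
      also have "\<dots> = ennreal (GJ v \<xi>0 n n z) + ennreal (cmod (T n z - Tr z))"
        using GJ_nonneg[of v] v_nonneg by (intro ennreal_plus) auto
      finally show ?thesis using True zB by simp
    qed (simp add: B_def)
  qed
  also have "\<dots> = (\<integral>\<^sup>+z\<in>B. ennreal (GJ v \<xi>0 n n z) \<partial>M) + (\<integral>\<^sup>+z\<in>B. ennreal (cmod (T n z - Tr z)) \<partial>M)"
    unfolding B_def by (subst nn_integral_add) auto
  also have "(\<integral>\<^sup>+z\<in>B. ennreal (GJ v \<xi>0 n n z) \<partial>M) = (\<integral>\<^sup>+z\<in>B. ennreal (Gr v n z) \<partial>M)"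
    unfolding B_def using v_nonneg by (intro set_int_Gr[symmetric]) auto
  also have "\<dots> \<le> ennreal (K \<xi>0 n * 2 powr (- e * real_of_int n)) * N"
    unfolding B_def by (rule E) simp
  also have "(\<integral>\<^sup>+z\<in>B. ennreal (cmod (T n z - Tr z)) \<partial>M) \<le> ennreal (geo \<xi>0 n n) * N"
    unfolding B_def by (rule L1_ball) simp
  also have "ennreal (K \<xi>0 n * 2 powr (- e * real_of_int n)) * N + ennreal (geo \<xi>0 n n) * N
      = ennreal (K \<xi>0 n * 2 powr (- e * real_of_int n) + geo \<xi>0 n n) * N"
    using K geo_nonneg by (simp add: ennreal_plus distrib_right)
  also have "K \<xi>0 n * 2 powr (- e * real_of_int n) + geo \<xi>0 n n
      = K \<xi>0 n * 2 powr (- e * real_of_int n) * (1 + 1 / (1 - 2 powr (- e)))"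
    unfolding geo_def by (simp add: algebra_simps)
  finally show ?thesis by (simp add: add_mono)
qed

end

theorem lemma2p3:
  fixes M :: "'a::metric_space measure"
    and C Q C'' s :: real
    and p q :: ennreal
    and S :: "int \<Rightarrow> 'a set"
    and \<psi> :: "int \<times> 'a \<Rightarrow> 'a \<Rightarrow> real"
  assumes space: "space M = UNIV" and sets: "sets M = sets borel"
    and balls: "\<And>\<xi> r. r > 0 \<Longrightarrow> 0 < emeasure M (ball \<xi> r) \<and> emeasure M (ball \<xi> r) < \<infinity>"
    and C: "C \<ge> 1" and Q: "Q > 0"
    and doubling: "\<And>\<xi> r t. r > 0 \<Longrightarrow> t \<ge> 1 \<Longrightarrow>
        measure M (ball \<xi> (t * r)) \<le> C * t powr Q * measure M (ball \<xi> r)"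
    and S: "\<And>n. max_separated n (S n)"
    and psi_nonneg: "\<And>x z. x \<in> HX S \<Longrightarrow> 0 \<le> \<psi> x z"
    and psi_supp: "\<And>x z. x \<in> HX S \<Longrightarrow> \<psi> x z \<noteq> 0 \<Longrightarrow> z \<in> Bx x"
    and psi_unity: "\<And>n z. ((\<lambda>\<xi>. \<psi> (n, \<xi>) z) has_sum 1) (S n)"
    and C'': "C'' > 0"
    and psi_lip: "\<And>x z w. x \<in> HX S \<Longrightarrow> \<bar>\<psi> x z - \<psi> x w\<bar> \<le> C'' * 2 powr (real_of_int (fst x)) * dist z w"
    and s: "0 < s"
    and p: "ennreal (Q / (Q + s)) < p"
    and q: "0 < q"
  shows "\<exists>Cx :: int \<times> 'a \<Rightarrow> real. \<forall>u :: int \<times> 'a \<Rightarrow> complex.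
     Inorm M S s p q (du S u) < \<infinity> \<longrightarrow>
     (\<exists>Tr :: 'a \<Rightarrow> complex.
        Tr \<in> borel_measurable M
      \<and> (\<forall>\<xi> r. set_integrable M (ball \<xi> r) Tr)
      \<and> (\<forall>\<xi> r. ((\<lambda>n. \<integral>\<^sup>+ z \<in> ball \<xi> r. ennreal (cmod (Tn S \<psi> n u z - Tr z)) \<partial>M) \<longlongrightarrow> 0) at_top)
      \<and> (AE z in M. ((\<lambda>n. Tn S \<psi> n u z) \<longlongrightarrow> Tr z) at_top)
      \<and> (\<forall>x\<in>HX S. (\<integral>\<^sup>+ z \<in> Bx x. ennreal (cmod (Tr z - u x)) \<partial>M)
             \<le> ennreal (Cx x) * Inorm M S s p q (du S u)))"
proof -
  interpret hf2 M C Q S \<psi> C''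
    by unfold_locales (fact space sets balls C Q doubling S psi_nonneg psi_supp psi_unity C'' psi_lip)+
  obtain \<kappa> where \<kappa>s: "\<kappa> < s" and H: "\<forall>c m. \<exists>K \<ge> 0. \<forall>v n. (\<forall>x. v x \<ge> 0) \<longrightarrow> m \<le> n \<longrightarrow>
     (\<integral>\<^sup>+z\<in>ball c (rad m). ennreal (Gr v n z) \<partial>M)
       \<le> ennreal (K * 2 powr (\<kappa> * real_of_int n)) * Lpn M p (level_fun S (\<lambda>x. ennreal (v x)) n)"
    using est_all[OF s p] by blast
  define Kf where "Kf c m = (SOME K. K \<ge> 0 \<and> (\<forall>v n. (\<forall>x. v x \<ge> 0) \<longrightarrow> m \<le> n \<longrightarrow>
     (\<integral>\<^sup>+z\<in>ball c (rad m). ennreal (Gr v n z) \<partial>M)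
       \<le> ennreal (K * 2 powr (\<kappa> * real_of_int n)) * Lpn M p (level_fun S (\<lambda>x. ennreal (v x)) n)))" for c m
  have Kf: "Kf c m \<ge> 0 \<and> (\<forall>v n. (\<forall>x. v x \<ge> 0) \<longrightarrow> m \<le> n \<longrightarrow>
     (\<integral>\<^sup>+z\<in>ball c (rad m). ennreal (Gr v n z) \<partial>M)
       \<le> ennreal (Kf c m * 2 powr (\<kappa> * real_of_int n)) * Lpn M p (level_fun S (\<lambda>x. ennreal (v x)) n))" for c m
    unfolding Kf_def by (rule someI_ex) (use H in blast)
  define e where "e = s - \<kappa>"
  have e: "e > 0" using \<kappa>s by (simp add: e_def)
  define Cx where "Cx x = Kf (snd x) (fst x) * 2 powr (- e * real_of_int (fst x)) * (1 + 1 / (1 - 2 powr (- e)))" for x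
  show ?thesis
  proof (intro exI[of _ Cx] allI impI)
    fix u :: "int \<times> 'a \<Rightarrow> complex"
    assume fin: "Inorm M S s p q (du S u) < \<infinity>"
    have duE: "du S u = (\<lambda>x. ennreal (ddu S u x))" by (rule ext) (rule du_eq)
    define N where "N = Inorm M S s p q (du S u)"
    have EE: "(\<integral>\<^sup>+z\<in>ball c (rad m). ennreal (Gr (ddu S u) n z) \<partial>M)
       \<le> ennreal (Kf c m * 2 powr (- e * real_of_int n)) * N" if mn: "m \<le> n" for c m n
    proof -
      have "(\<integral>\<^sup>+z\<in>ball c (rad m). ennreal (Gr (ddu S u) n z) \<partial>M)
       \<le> ennreal (Kf c m * 2 powr ((\<kappa> - s) * real_of_int n)) * Inorm M S s p q (\<lambda>x. ennreal (ddu S u x))"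
      proof (rule est_Inorm[OF q _ _ _ mn])
        show "\<And>v n. \<forall>x. v x \<ge> 0 \<Longrightarrow> m \<le> n \<Longrightarrow>
          (\<integral>\<^sup>+z\<in>ball c (rad m). ennreal (Gr v n z) \<partial>M)
           \<le> ennreal (Kf c m * 2 powr (\<kappa> * real_of_int n)) * Lpn M p (level_fun S (\<lambda>x. ennreal (v x)) n)"
          using Kf[of c m] by blast
        show "Kf c m \<ge> 0" using Kf[of c m] by blast
        show "\<forall>x. ddu S u x \<ge> 0" by (simp add: ddu_nonneg)
      qed
      moreover have "(\<kappa> - s) * real_of_int n = - e * real_of_int n" by (simp add: e_def algebra_simps)
      ultimately show ?thesis unfolding N_def duE by simp
    qed
    interpret conv M C Q S \<psi> C'' u e Kf N
    proof unfold_locales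
      show "e > 0" by (rule e)
      show "\<And>c m. Kf c m \<ge> 0" using Kf by blast
      show "N \<noteq> \<infinity>" using fin by (simp add: N_def)
      show "\<And>c m n. m \<le> n \<Longrightarrow> (\<integral>\<^sup>+z\<in>ball c (rad m). ennreal (Gr (ddu S u) n z) \<partial>M)
              \<le> ennreal (Kf c m * 2 powr (- e * real_of_int n)) * N" by (rule EE)
    qed
    show "\<exists>Tr :: 'a \<Rightarrow> complex.
        Tr \<in> borel_measurable M
      \<and> (\<forall>\<xi> r. set_integrable M (ball \<xi> r) Tr)
      \<and> (\<forall>\<xi> r. ((\<lambda>n. \<integral>\<^sup>+ z \<in> ball \<xi> r. ennreal (cmod (Tn S \<psi> n u z - Tr z)) \<partial>M) \<longlongrightarrow> 0) at_top)
      \<and> (AE z in M. ((\<lambda>n. Tn S \<psi> n u z) \<longlongrightarrow> Tr z) at_top)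
      \<and> (\<forall>x\<in>HX S. (\<integral>\<^sup>+ z \<in> Bx x. ennreal (cmod (Tr z - u x)) \<partial>M)
             \<le> ennreal (Cx x) * Inorm M S s p q (du S u))"
    proof (intro exI[of _ Tr] conjI allI ballI)
      show "Tr \<in> borel_measurable M" by (rule Tr_meas)
      show "set_integrable M (ball \<xi> r) Tr" for \<xi> r by (rule Tr_int)
      show "((\<lambda>n. \<integral>\<^sup>+ z \<in> ball \<xi> r. ennreal (cmod (Tn S \<psi> n u z - Tr z)) \<partial>M) \<longlongrightarrow> 0) at_top" for \<xi> r
        by (rule L1_conv)
      show "AE z in M. ((\<lambda>n. Tn S \<psi> n u z) \<longlongrightarrow> Tr z) at_top" by (rule AE_conv)
      fix x assume x: "x \<in> HX S"
      obtain n \<xi>0 where xe: "x = (n, \<xi>0)" by force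
      have \<xi>0: "\<xi>0 \<in> S n" using x xe by simp
      show "(\<integral>\<^sup>+ z \<in> Bx x. ennreal (cmod (Tr z - u x)) \<partial>M) \<le> ennreal (Cx x) * Inorm M S s p q (du S u)"
        using final_bound[OF \<xi>0] unfolding xe Cx_def N_def by simp
    qed
  qed
qed


end
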